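(* Let $K>0$. There exist $K'>0$ and $\epsilon_0>0$ such that for every $0<\epsilon\leq\epsilon_0$ and every 4-tensor $A$ satisfying condition A1 with parameter $\epsilon$ and constant $K$, there exist bounded invertible operators $G_h,G_v$ on $V$ such that the gauge-transformed tensor $\tilde A$ satisfies $|\tilde A_{0000}-1|\leq K'\epsilon^2$ and $\tilde A/\tilde A_{0000}$ satisfies condition A2 with parameter $\epsilon$ and constant $K'$.
   Context: $V$ is a real separable infinite-dimensional Hilbert space with orthonormal basis $(e_i)_{i\geq0}$. A 4-tensor is an array $A=(A_{ijkl})_{i,j,k,l\geq0}$ of reals with finite Hilbert–Schmidt norm $\|A\|=(\sum A_{ijkl}^2)^{1/2}$; indices belong to the right, top, left, bottom legs respectively. $A_*$ is the tensor with $(A_* )_{0000}=1$ and all other components zero. An index is called nonzero if it is $\geq1$. Condition A1 (parameter $\epsilon$, constant $K$): $A_{0000}=1$ and $\|A-A_*\|\leq K\epsilon$. Condition A2 (parameter $\epsilon$, constant $K$): A1 holds, and the tensor formed by the components of $A$ with exactly one nonzero index (components $A_{x000},A_{0x00},A_{00x0},A_{000x}$, $x\geq1$; all others set to zero) has norm $\leq K\epsilon^2$. Gauge transform of $A$ by bounded invertible $G_h,G_v$ on $V$ (matrix entries in the basis $(e_i)$): $\tilde A_{ijkl}=\sum_{i',j',k',l'}(G_h)_{i'i}(G_v)_{j'j}(G_h^{-1})_{kk'}(G_v^{-1})_{ll'}A_{i'j'k'l'}$. *)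

theory Defs
  imports "HOL-Analysis.Analysis"
begin

text \<open>The Hilbert space V is realised as l2 over the index set nat, i.e. square-summable
  real sequences; e_i is the i-th unit sequence.  Operators on V are modelled as maps
  (nat \<Rightarrow> real) \<Rightarrow> (nat \<Rightarrow> real), only their behaviour on l2 matters.\<close>

definition is_l2 :: "(nat \<Rightarrow> real) \<Rightarrow> bool" where
  "is_l2 x \<longleftrightarrow> (\<lambda>i. (x i)\<^sup>2) summable_on UNIV"

definition l2norm :: "(nat \<Rightarrow> real) \<Rightarrow> real" where
  "l2norm x = sqrt (\<Sum>\<^sub>\<infinity>i. (x i)\<^sup>2)"

definition unit_vec :: "nat \<Rightarrow> nat \<Rightarrow> real" where
  "unit_vec j = (\<lambda>k. if k = j then 1 else 0)"

definition bounded_op :: "((nat \<Rightarrow> real) \<Rightarrow> (nat \<Rightarrow> real)) \<Rightarrow> bool" where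
  "bounded_op G \<longleftrightarrow>
     (\<forall>x. is_l2 x \<longrightarrow> is_l2 (G x)) \<and>
     (\<forall>x y a b. is_l2 x \<longrightarrow> is_l2 y \<longrightarrow>
        G (\<lambda>i. a * x i + b * y i) = (\<lambda>i. a * G x i + b * G y i)) \<and>
     (\<exists>C. \<forall>x. is_l2 x \<longrightarrow> l2norm (G x) \<le> C * l2norm x)"

definition is_inverse_op :: "((nat \<Rightarrow> real) \<Rightarrow> (nat \<Rightarrow> real)) \<Rightarrow> ((nat \<Rightarrow> real) \<Rightarrow> (nat \<Rightarrow> real)) \<Rightarrow> bool" where
  "is_inverse_op G H \<longleftrightarrow> bounded_op H \<and> (\<forall>x. is_l2 x \<longrightarrow> H (G x) = x \<and> G (H x) = x)"

definition invertible_op :: "((nat \<Rightarrow> real) \<Rightarrow> (nat \<Rightarrow> real)) \<Rightarrow> bool" where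
  "invertible_op G \<longleftrightarrow> bounded_op G \<and> (\<exists>H. is_inverse_op G H)"

definition op_inv :: "((nat \<Rightarrow> real) \<Rightarrow> (nat \<Rightarrow> real)) \<Rightarrow> ((nat \<Rightarrow> real) \<Rightarrow> (nat \<Rightarrow> real))" where
  "op_inv G = (SOME H. is_inverse_op G H)"

definition op_mat :: "((nat \<Rightarrow> real) \<Rightarrow> (nat \<Rightarrow> real)) \<Rightarrow> nat \<Rightarrow> nat \<Rightarrow> real" where
  "op_mat G i j = G (unit_vec j) i"

type_synonym tensor4 = "nat \<Rightarrow> nat \<Rightarrow> nat \<Rightarrow> nat \<Rightarrow> real"

definition hs_tensor :: "tensor4 \<Rightarrow> bool" where
  "hs_tensor A \<longleftrightarrow> (\<lambda>(i,j,k,l). (A i j k l)\<^sup>2) summable_on (UNIV :: (nat \<times> nat \<times> nat \<times> nat) set)"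

definition hs_norm :: "tensor4 \<Rightarrow> real" where
  "hs_norm A = sqrt (\<Sum>\<^sub>\<infinity>(i,j,k,l)\<in>(UNIV :: (nat \<times> nat \<times> nat \<times> nat) set). (A i j k l)\<^sup>2)"

definition A_star :: tensor4 where
  "A_star i j k l = (if i = 0 \<and> j = 0 \<and> k = 0 \<and> l = 0 then 1 else 0)"

definition cond_A1 :: "real \<Rightarrow> real \<Rightarrow> tensor4 \<Rightarrow> bool" where
  "cond_A1 \<epsilon> K A \<longleftrightarrow> hs_tensor A \<and> A 0 0 0 0 = 1 \<and>
     hs_norm (\<lambda>i j k l. A i j k l - A_star i j k l) \<le> K * \<epsilon>"

definition one_nonzero_part :: "tensor4 \<Rightarrow> tensor4" where
  "one_nonzero_part A i j k l =
     (if of_bool (i \<noteq> 0) + of_bool (j \<noteq> 0) + of_bool (k \<noteq> 0) + of_bool (l \<noteq> 0) = (1::nat)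
      then A i j k l else 0)"

definition cond_A2 :: "real \<Rightarrow> real \<Rightarrow> tensor4 \<Rightarrow> bool" where
  "cond_A2 \<epsilon> K A \<longleftrightarrow> cond_A1 \<epsilon> K A \<and> hs_norm (one_nonzero_part A) \<le> K * \<epsilon>\<^sup>2"

definition gauge :: "((nat \<Rightarrow> real) \<Rightarrow> (nat \<Rightarrow> real)) \<Rightarrow> ((nat \<Rightarrow> real) \<Rightarrow> (nat \<Rightarrow> real)) \<Rightarrow> tensor4 \<Rightarrow> tensor4" where
  "gauge Gh Gv A i j k l =
     (\<Sum>\<^sub>\<infinity>i'. \<Sum>\<^sub>\<infinity>j'. \<Sum>\<^sub>\<infinity>k'. \<Sum>\<^sub>\<infinity>l'.
        op_mat Gh i' i * op_mat Gv j' j * op_mat (op_inv Gh) k k' * op_mat (op_inv Gv) l l'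
        * A i' j' k' l')"

end

theory Submission
  imports Defs
begin
lemma B1:
  fixes f :: "'a \<Rightarrow> real"
  assumes "(\<lambda>x. (f x)\<^sup>2) summable_on UNIV" "finite F"
  shows "L2_set f F \<le> sqrt (\<Sum>\<^sub>\<infinity>x. (f x)\<^sup>2)"
  unfolding L2_set_def
  by (intro real_sqrt_le_mono finite_sum_le_infsum assms) auto

lemma B2:
  fixes f :: "'a \<Rightarrow> real"
  assumes "\<And>F. finite F \<Longrightarrow> L2_set f F \<le> C"
  shows "(\<lambda>x. (f x)\<^sup>2) summable_on UNIV \<and> sqrt (\<Sum>\<^sub>\<infinity>x. (f x)\<^sup>2) \<le> C"
proof -
  have C0: "0 \<le> C" using assms[of "{}"] by simp
  have S: "sum (\<lambda>x. (f x)\<^sup>2) F \<le> C\<^sup>2" if "finite F" for F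
  proof -
    have "sum (\<lambda>x. (f x)\<^sup>2) F = (L2_set f F)\<^sup>2"
      unfolding L2_set_def by (simp add: sum_nonneg)
    also have "\<dots> \<le> C\<^sup>2" using assms[OF that] by (simp add: power_mono)
    finally show ?thesis .
  qed
  have sm: "(\<lambda>x. (f x)\<^sup>2) summable_on UNIV"
    by (rule nonneg_bdd_above_summable_on) (auto intro!: bdd_aboveI2 S)
  have "(\<Sum>\<^sub>\<infinity>x. (f x)\<^sup>2) \<le> C\<^sup>2"
    by (rule infsum_le_finite_sums[OF sm]) (auto intro: S)
  hence "sqrt (\<Sum>\<^sub>\<infinity>x. (f x)\<^sup>2) \<le> sqrt (C\<^sup>2)" by (rule real_sqrt_le_mono)
  with C0 show ?thesis using sm by simp
qed

definition tu :: "tensor4 \<Rightarrow> nat \<times> nat \<times> nat \<times> nat \<Rightarrow> real" where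
  "tu T = (\<lambda>(i,j,k,l). T i j k l)"

lemma tu_fun: "(\<lambda>(i,j,k,l). (A i j k l)\<^sup>2) = (\<lambda>x. (tu A x)\<^sup>2)"
  by (auto simp: tu_def fun_eq_iff split: prod.splits)

lemma hs_tensor_tu: "hs_tensor A \<longleftrightarrow> (\<lambda>x. (tu A x)\<^sup>2) summable_on UNIV"
  unfolding hs_tensor_def tu_fun ..

lemma hs_norm_tu: "hs_norm A = sqrt (\<Sum>\<^sub>\<infinity>x. (tu A x)\<^sup>2)"
  unfolding hs_norm_def tu_fun ..

lemma is_l2_norm: "is_l2 x \<longleftrightarrow> (\<lambda>i. (x i)\<^sup>2) summable_on UNIV"
  by (simp add: is_l2_def)

lemma L2_set_mono_set:
  assumes "finite G" "F \<subseteq> G"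
  shows "L2_set f F \<le> L2_set f G"
  unfolding L2_set_def
  by (intro real_sqrt_le_mono sum_mono2 assms) auto

lemma L2_set_scale: "L2_set (\<lambda>i. s * f i) F = \<bar>s\<bar> * L2_set f F"
  unfolding L2_set_def
  by (simp add: power_mult_distrib real_sqrt_mult flip: sum_distrib_left)

lemma l2_le: "is_l2 x \<Longrightarrow> finite F \<Longrightarrow> L2_set x F \<le> l2norm x"
  unfolding is_l2_def l2norm_def by (rule B1)

lemma l2_from_bound:
  assumes "\<And>F. finite F \<Longrightarrow> L2_set x F \<le> C"
  shows "is_l2 x \<and> l2norm x \<le> C"
  using B2[of x C] assms unfolding is_l2_def l2norm_def by blast

lemma l2_coord: "is_l2 x \<Longrightarrow> \<bar>x m\<bar> \<le> l2norm x"
  using l2_le[of x "{m}"] by (simp add: L2_set_def)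

lemma l2_nonneg: "0 \<le> l2norm x"
  unfolding l2norm_def by (simp add: infsum_nonneg)

lemma l2_fin_supp:
  assumes "\<And>i. i > N \<Longrightarrow> v i = 0"
  shows "is_l2 v"
proof -
  have "L2_set v F \<le> L2_set v {..N}" if "finite F" for F
  proof -
    have "L2_set v F = L2_set v (F \<inter> {..N})"
      unfolding L2_set_def using that assms
      by (intro arg_cong[where f=sqrt] sum.mono_neutral_right) (auto simp: not_le)
    also have "\<dots> \<le> L2_set v {..N}" by (rule L2_set_mono_set) auto
    finally show ?thesis .
  qed
  thus ?thesis using l2_from_bound by blast
qed

definition rk1 :: "nat \<Rightarrow> (nat \<Rightarrow> real) \<Rightarrow> (nat \<Rightarrow> real) \<Rightarrow> real \<Rightarrow> (nat \<Rightarrow> real) \<Rightarrow> nat \<Rightarrow> real" where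
  "rk1 N u v c x = (\<lambda>i. x i + c * (\<Sum>m\<le>N. u m * x m) * v i)"

lemma rk1_bound:
  assumes "is_l2 v" "is_l2 x"
  shows "is_l2 (rk1 N u v c x) \<and>
         l2norm (rk1 N u v c x) \<le> (1 + \<bar>c\<bar> * (\<Sum>m\<le>N. \<bar>u m\<bar>) * l2norm v) * l2norm x"
proof -
  define s where "s = c * (\<Sum>m\<le>N. u m * x m)"
  have s: "\<bar>s\<bar> \<le> \<bar>c\<bar> * (\<Sum>m\<le>N. \<bar>u m\<bar>) * l2norm x"
  proof -
    have "\<bar>\<Sum>m\<le>N. u m * x m\<bar> \<le> (\<Sum>m\<le>N. \<bar>u m\<bar> * \<bar>x m\<bar>)"
      by (rule order_trans[OF sum_abs]) (simp add: abs_mult)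
    also have "\<dots> \<le> (\<Sum>m\<le>N. \<bar>u m\<bar> * l2norm x)"
      by (intro sum_mono mult_left_mono l2_coord assms) auto
    also have "\<dots> = (\<Sum>m\<le>N. \<bar>u m\<bar>) * l2norm x" by (simp add: sum_distrib_right)
    finally have "\<bar>\<Sum>m\<le>N. u m * x m\<bar> \<le> (\<Sum>m\<le>N. \<bar>u m\<bar>) * l2norm x" .
    thus ?thesis unfolding s_def abs_mult mult.assoc by (intro mult_left_mono) auto
  qed
  have "L2_set (rk1 N u v c x) F \<le> (1 + \<bar>c\<bar> * (\<Sum>m\<le>N. \<bar>u m\<bar>) * l2norm v) * l2norm x"
    if "finite F" for F
  proof -
    have "L2_set (rk1 N u v c x) F = L2_set (\<lambda>i. x i + s * v i) F"
      unfolding rk1_def s_def by (simp add: mult.assoc)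
    also have "\<dots> \<le> L2_set x F + L2_set (\<lambda>i. s * v i) F" by (rule L2_set_triangle_ineq)
    also have "\<dots> = L2_set x F + \<bar>s\<bar> * L2_set v F" by (simp add: L2_set_scale)
    also have "\<dots> \<le> l2norm x + \<bar>s\<bar> * l2norm v"
      by (intro add_mono mult_left_mono l2_le assms that) auto
    also have "\<dots> \<le> l2norm x + (\<bar>c\<bar> * (\<Sum>m\<le>N. \<bar>u m\<bar>) * l2norm x) * l2norm v"
      by (intro add_left_mono mult_right_mono s l2_nonneg)
    also have "\<dots> = (1 + \<bar>c\<bar> * (\<Sum>m\<le>N. \<bar>u m\<bar>) * l2norm v) * l2norm x"
      by (simp add: algebra_simps)
    finally show ?thesis .
  qed
  thus ?thesis using l2_from_bound by blast
qed

lemma rk1_lin: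
  "rk1 N u v c (\<lambda>i. a * x i + b * y i) = (\<lambda>i. a * rk1 N u v c x i + b * rk1 N u v c y i)"
proof -
  have h: "(\<Sum>m\<le>N. u m * (a * x m + b * y m)) = a * (\<Sum>m\<le>N. u m * x m) + b * (\<Sum>m\<le>N. u m * y m)"
    by (simp add: sum.distrib sum_distrib_left ring_distribs mult.left_commute)
  show ?thesis unfolding rk1_def fun_eq_iff h by (simp add: ring_distribs)
qed

lemma bounded_rk1:
  assumes "is_l2 v"
  shows "bounded_op (rk1 N u v c)"
  unfolding bounded_op_def using rk1_bound[OF assms] rk1_lin by blast

lemma bounded_comp:
  assumes "bounded_op F" "bounded_op G"
  shows "bounded_op (\<lambda>x. F (G x))"
proof -
  obtain C1 where C1: "\<And>x. is_l2 x \<Longrightarrow> l2norm (F x) \<le> C1 * l2norm x"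
    using assms(1) unfolding bounded_op_def by blast
  obtain C2 where C2: "\<And>x. is_l2 x \<Longrightarrow> l2norm (G x) \<le> C2 * l2norm x"
    using assms(2) unfolding bounded_op_def by blast
  have l2G: "\<And>x. is_l2 x \<Longrightarrow> is_l2 (G x)" and l2F: "\<And>x. is_l2 x \<Longrightarrow> is_l2 (F x)"
    using assms unfolding bounded_op_def by blast+
  have "l2norm (F (G x)) \<le> (max C1 0 * max C2 0) * l2norm x" if "is_l2 x" for x
  proof -
    have "l2norm (F (G x)) \<le> C1 * l2norm (G x)" using C1 l2G that by blast
    also have "\<dots> \<le> max C1 0 * l2norm (G x)" by (intro mult_right_mono l2_nonneg) auto
    also have "\<dots> \<le> max C1 0 * (C2 * l2norm x)" by (intro mult_left_mono C2 that) auto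
    also have "\<dots> \<le> max C1 0 * (max C2 0 * l2norm x)"
      by (intro mult_left_mono mult_right_mono l2_nonneg) auto
    finally show ?thesis by simp
  qed
  moreover have "F (G (\<lambda>i. a * x i + b * y i)) = (\<lambda>i. a * F (G x) i + b * F (G y) i)"
    if "is_l2 x" "is_l2 y" for x y a b
  proof -
    have lG: "G (\<lambda>i. a * x i + b * y i) = (\<lambda>i. a * G x i + b * G y i)"
      using assms(2) that unfolding bounded_op_def by blast
    have "F (\<lambda>i. a * G x i + b * G y i) = (\<lambda>i. a * F (G x) i + b * F (G y) i)"
      using assms(1) l2G that unfolding bounded_op_def by blast
    thus ?thesis using lG by simp
  qed
  ultimately show ?thesis unfolding bounded_op_def using l2F l2G by blast
qed

lemma rk1_inv:
  assumes "(\<Sum>m\<le>N. u m * v m) = 0"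
  shows "rk1 N u v (-c) (rk1 N u v c x) = x"
proof -
  have "(\<Sum>m\<le>N. u m * (x m + c * (\<Sum>m\<le>N. u m * x m) * v m)) = (\<Sum>m\<le>N. u m * x m)"
  proof -
    have "(\<Sum>m\<le>N. u m * (x m + c * (\<Sum>m\<le>N. u m * x m) * v m))
       = (\<Sum>m\<le>N. u m * x m) + c * (\<Sum>m\<le>N. u m * x m) * (\<Sum>m\<le>N. u m * v m)"
      by (simp add: sum.distrib sum_distrib_left ring_distribs mult.left_commute)
    with assms show ?thesis by simp
  qed
  thus ?thesis unfolding rk1_def by (simp add: fun_eq_iff)
qed

definition GH :: "nat \<Rightarrow> (nat \<Rightarrow> real) \<Rightarrow> (nat \<Rightarrow> real) \<Rightarrow> (nat \<Rightarrow> real) \<Rightarrow> nat \<Rightarrow> real" where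
  "GH N a b = (\<lambda>x. rk1 N (unit_vec 0) b 1 (rk1 N a (unit_vec 0) 1 x))"
definition HI :: "nat \<Rightarrow> (nat \<Rightarrow> real) \<Rightarrow> (nat \<Rightarrow> real) \<Rightarrow> (nat \<Rightarrow> real) \<Rightarrow> nat \<Rightarrow> real" where
  "HI N a b = (\<lambda>x. rk1 N a (unit_vec 0) (-1) (rk1 N (unit_vec 0) b (-1) x))"

lemma sum_uv0: "(\<Sum>m\<le>N. a m * unit_vec 0 m) = a 0" "(\<Sum>m\<le>N. unit_vec 0 m * b m) = b 0"
proof -
  have "(\<Sum>m\<le>N. a m * unit_vec 0 m) = (\<Sum>m\<le>N. if m = 0 then a m else 0)"
    by (rule sum.cong) (auto simp: unit_vec_def)
  thus "(\<Sum>m\<le>N. a m * unit_vec 0 m) = a 0" by simp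
  have "(\<Sum>m\<le>N. unit_vec 0 m * b m) = (\<Sum>m\<le>N. if m = 0 then b m else 0)"
    by (rule sum.cong) (auto simp: unit_vec_def)
  thus "(\<Sum>m\<le>N. unit_vec 0 m * b m) = b 0" by simp
qed

lemma l2_uv: "is_l2 (unit_vec j)"
  by (rule l2_fin_supp[of j]) (simp add: unit_vec_def)

lemma inverse_op_lemma:
  assumes "bounded_op G" "bounded_op H0" "\<And>x. H0 (G x) = x" "\<And>x. G (H0 x) = x"
  shows "invertible_op G \<and> (\<forall>y. is_l2 y \<longrightarrow> op_inv G y = H0 y)"
proof -
  have inv: "is_inverse_op G H0" unfolding is_inverse_op_def using assms by blast
  hence I: "invertible_op G" unfolding invertible_op_def using assms by blast
  have H: "is_inverse_op G (op_inv G)" unfolding op_inv_def by (rule someI[of _ H0]) (rule inv)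
  have "op_inv G y = H0 y" if "is_l2 y" for y
  proof -
    have l: "is_l2 (H0 y)" using assms(2) that unfolding bounded_op_def by blast
    have "op_inv G y = op_inv G (G (H0 y))" using assms(4) by simp
    also have "\<dots> = H0 y" using H l unfolding is_inverse_op_def by blast
    finally show ?thesis .
  qed
  with I show ?thesis by blast
qed

lemma GH_props:
  assumes "a 0 = 0" "b 0 = 0" "\<And>i. i > N \<Longrightarrow> b i = 0"
  shows "invertible_op (GH N a b) \<and> (\<forall>y. is_l2 y \<longrightarrow> op_inv (GH N a b) y = HI N a b y)"
proof (rule inverse_op_lemma)
  have lb: "is_l2 b" using l2_fin_supp assms(3) by blast
  show "bounded_op (GH N a b)" unfolding GH_def
    by (rule bounded_comp; rule bounded_rk1; rule lb l2_uv)
  show "bounded_op (HI N a b)" unfolding HI_def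
    by (rule bounded_comp; rule bounded_rk1; rule lb l2_uv)
  have z1: "(\<Sum>m\<le>N. a m * unit_vec 0 m) = 0" and z2: "(\<Sum>m\<le>N. unit_vec 0 m * b m) = 0"
    using assms sum_uv0 by simp_all
  show "HI N a b (GH N a b x) = x" for x
    unfolding GH_def HI_def using rk1_inv[OF z1, of 1] rk1_inv[OF z2, of 1] by simp
  show "GH N a b (HI N a b x) = x" for x
    unfolding GH_def HI_def using rk1_inv[OF z1, of "-1"] rk1_inv[OF z2, of "-1"] by simp
qed

definition XM :: "(nat \<Rightarrow> real) \<Rightarrow> (nat \<Rightarrow> real) \<Rightarrow> nat \<Rightarrow> nat \<Rightarrow> real" where
  "XM a b i' i = (if i' = 0 then a i else 0) + (if i = 0 then b i' else 0) + b i' * a i"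

definition XN :: "(nat \<Rightarrow> real) \<Rightarrow> (nat \<Rightarrow> real) \<Rightarrow> real \<Rightarrow> nat \<Rightarrow> nat \<Rightarrow> real" where
  "XN a b d k k' = - (if k' = 0 then b k else 0) - (if k = 0 then a k' - (if k' = 0 then d else 0) else 0)"

definition dl :: "nat \<Rightarrow> nat \<Rightarrow> real" where "dl i j = (if i = j then 1 else 0)"

lemma sum_uv: "(\<Sum>m\<le>N. a m * unit_vec i m) = (if i \<le> N then a i else 0)"
  by (simp add: unit_vec_def if_distrib cong: if_cong)

lemma GH_mat:
  assumes "a 0 = 0" "\<And>i. i > N \<Longrightarrow> a i = 0"
  shows "op_mat (GH N a b) i' i = dl i' i + XM a b i' i"
proof -
  have s: "(\<Sum>m\<le>N. a m * unit_vec i m) = a i" using assms(2) by (simp add: sum_uv)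
  show ?thesis
    unfolding op_mat_def GH_def rk1_def s sum_uv0
    by (simp add: XM_def dl_def unit_vec_def assms(1) algebra_simps)
qed

lemma HI_mat:
  assumes "a 0 = 0" "\<And>i. i > N \<Longrightarrow> a i = 0"
  shows "HI N a b (unit_vec k') k = dl k k' + XN a b (\<Sum>m\<le>N. a m * b m) k k'"
proof -
  have s: "(\<Sum>m\<le>N. a m * unit_vec k' m) = a k'" using assms(2) by (simp add: sum_uv)
  define z where "z = rk1 N (unit_vec 0) b (-1) (unit_vec k')"
  have z: "z = (\<lambda>t. unit_vec k' t - unit_vec k' 0 * b t)"
    unfolding z_def rk1_def sum_uv0 by (simp add: fun_eq_iff)
  have s2: "(\<Sum>m\<le>N. a m * z m)
     = a k' - unit_vec k' 0 * (\<Sum>m\<le>N. a m * b m)"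
    unfolding z using s by (simp add: ring_distribs sum_subtractf sum_distrib_left mult.left_commute)
  have "HI N a b (unit_vec k') = (\<lambda>t. z t - (\<Sum>m\<le>N. a m * z m) * unit_vec 0 t)"
    unfolding HI_def z_def[symmetric] by (simp add: rk1_def)
  also have "\<dots> = (\<lambda>t. unit_vec k' t - unit_vec k' 0 * b t
      - (a k' - unit_vec k' 0 * (\<Sum>m\<le>N. a m * b m)) * unit_vec 0 t)"
    unfolding s2 unfolding z ..
  finally have "HI N a b (unit_vec k') = (\<lambda>t. unit_vec k' t - unit_vec k' 0 * b t
      - (a k' - unit_vec k' 0 * (\<Sum>m\<le>N. a m * b m)) * unit_vec 0 t)" .
  thus ?thesis by (simp add: XN_def dl_def unit_vec_def)
qed

lemma infsum_trunc:
  fixes f :: "nat \<Rightarrow> real"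
  assumes "\<And>n. n > R \<Longrightarrow> f n = 0"
  shows "(\<Sum>\<^sub>\<infinity>n. f n) = (\<Sum>n\<le>R. f n)"
proof -
  have "(\<Sum>\<^sub>\<infinity>n. f n) = infsum f {..R}"
    by (rule infsum_cong_neutral) (use assms in \<open>auto simp: not_le\<close>)
  thus ?thesis by simp
qed

lemma nest_trunc:
  fixes F :: "nat \<Rightarrow> nat \<Rightarrow> nat \<Rightarrow> nat \<Rightarrow> real"
  assumes "\<And>i' j' k' l'. i' > R \<or> j' > R \<or> k' > R \<or> l' > R \<Longrightarrow> F i' j' k' l' = 0"
  shows "(\<Sum>\<^sub>\<infinity>i'. \<Sum>\<^sub>\<infinity>j'. \<Sum>\<^sub>\<infinity>k'. \<Sum>\<^sub>\<infinity>l'. F i' j' k' l')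
       = (\<Sum>i'\<le>R. \<Sum>j'\<le>R. \<Sum>k'\<le>R. \<Sum>l'\<le>R. F i' j' k' l')"
proof -
  have e4: "(\<Sum>\<^sub>\<infinity>l'. F i' j' k' l') = (\<Sum>l'\<le>R. F i' j' k' l')" for i' j' k'
    by (rule infsum_trunc) (use assms in auto)
  have e3: "(\<Sum>\<^sub>\<infinity>k'. \<Sum>l'\<le>R. F i' j' k' l') = (\<Sum>k'\<le>R. \<Sum>l'\<le>R. F i' j' k' l')" for i' j'
    by (rule infsum_trunc) (use assms in auto)
  have e2: "(\<Sum>\<^sub>\<infinity>j'. \<Sum>k'\<le>R. \<Sum>l'\<le>R. F i' j' k' l') = (\<Sum>j'\<le>R. \<Sum>k'\<le>R. \<Sum>l'\<le>R. F i' j' k' l')" for i'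
    by (rule infsum_trunc) (use assms in auto)
  have e1: "(\<Sum>\<^sub>\<infinity>i'. \<Sum>j'\<le>R. \<Sum>k'\<le>R. \<Sum>l'\<le>R. F i' j' k' l') = (\<Sum>i'\<le>R. \<Sum>j'\<le>R. \<Sum>k'\<le>R. \<Sum>l'\<le>R. F i' j' k' l')"
    by (rule infsum_trunc) (use assms in auto)
  show ?thesis by (simp only: e4 e3 e2 e1)
qed

definition leg1 :: "nat \<Rightarrow> (nat \<Rightarrow> nat \<Rightarrow> real) \<Rightarrow> tensor4 \<Rightarrow> tensor4" where
  "leg1 R X T = (\<lambda>i j k l. \<Sum>i'\<le>R. X i' i * T i' j k l)"
definition leg2 :: "nat \<Rightarrow> (nat \<Rightarrow> nat \<Rightarrow> real) \<Rightarrow> tensor4 \<Rightarrow> tensor4" where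
  "leg2 R X T = (\<lambda>i j k l. \<Sum>j'\<le>R. X j' j * T i j' k l)"
definition leg3 :: "nat \<Rightarrow> (nat \<Rightarrow> nat \<Rightarrow> real) \<Rightarrow> tensor4 \<Rightarrow> tensor4" where
  "leg3 R X T = (\<lambda>i j k l. \<Sum>k'\<le>R. X k k' * T i j k' l)"
definition leg4 :: "nat \<Rightarrow> (nat \<Rightarrow> nat \<Rightarrow> real) \<Rightarrow> tensor4 \<Rightarrow> tensor4" where
  "leg4 R X T = (\<lambda>i j k l. \<Sum>l'\<le>R. X l l' * T i j k l')"

definition tadd :: "tensor4 \<Rightarrow> tensor4 \<Rightarrow> tensor4" where
  "tadd T U = (\<lambda>i j k l. T i j k l + U i j k l)"

definition GG :: "nat \<Rightarrow> (nat \<Rightarrow> nat \<Rightarrow> real) \<Rightarrow> (nat \<Rightarrow> nat \<Rightarrow> real) \<Rightarrow> (nat \<Rightarrow> nat \<Rightarrow> real) \<Rightarrow> (nat \<Rightarrow> nat \<Rightarrow> real) \<Rightarrow> tensor4 \<Rightarrow> tensor4" where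
  "GG R X1 X2 X3 X4 T = (let T4 = tadd T (leg4 R X4 T); T3 = tadd T4 (leg3 R X3 T4);
      T2 = tadd T3 (leg2 R X2 T3) in tadd T2 (leg1 R X1 T2))"

lemma sum_dl1: "i \<le> R \<Longrightarrow> (\<Sum>i'\<le>R. dl i' i * f i') = f i"
proof -
  assume "i \<le> R"
  have "(\<Sum>i'\<le>R. dl i' i * f i') = (\<Sum>i'\<le>R. if i' = i then f i' else 0)"
    by (rule sum.cong) (auto simp: dl_def)
  thus ?thesis using \<open>i \<le> R\<close> by simp
qed

lemma sum_dl2: "i \<le> R \<Longrightarrow> (\<Sum>i'\<le>R. dl i i' * f i') = f i"
proof -
  assume "i \<le> R"
  have "(\<Sum>i'\<le>R. dl i i' * f i') = (\<Sum>i'\<le>R. if i' = i then f i' else 0)"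
    by (rule sum.cong) (auto simp: dl_def)
  thus ?thesis using \<open>i \<le> R\<close> by simp
qed

lemma st1: "i \<le> R \<Longrightarrow> tadd T (leg1 R X T) i j k l = (\<Sum>i'\<le>R. (dl i' i + X i' i) * T i' j k l)"
  by (simp add: tadd_def leg1_def ring_distribs sum.distrib sum_dl1)
lemma st2: "j \<le> R \<Longrightarrow> tadd T (leg2 R X T) i j k l = (\<Sum>j'\<le>R. (dl j' j + X j' j) * T i j' k l)"
  by (simp add: tadd_def leg2_def ring_distribs sum.distrib sum_dl1)
lemma st3: "k \<le> R \<Longrightarrow> tadd T (leg3 R X T) i j k l = (\<Sum>k'\<le>R. (dl k k' + X k k') * T i j k' l)"
  by (simp add: tadd_def leg3_def ring_distribs sum.distrib sum_dl2)
lemma st4: "l \<le> R \<Longrightarrow> tadd T (leg4 R X T) i j k l = (\<Sum>l'\<le>R. (dl l l' + X l l') * T i j k l')"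
  by (simp add: tadd_def leg4_def ring_distribs sum.distrib sum_dl2)

lemma GG_expand:
  assumes "i \<le> R" "j \<le> R" "k \<le> R" "l \<le> R"
  shows "GG R X1 X2 X3 X4 T i j k l =
    (\<Sum>i'\<le>R. \<Sum>j'\<le>R. \<Sum>k'\<le>R. \<Sum>l'\<le>R. (dl i' i + X1 i' i) * (dl j' j + X2 j' j) *
        (dl k k' + X3 k k') * (dl l l' + X4 l l') * T i' j' k' l')"
  unfolding GG_def Let_def using assms
  by (simp add: st1 st2 st3 st4 sum_distrib_left mult.assoc)

lemma gauge_GG:
  assumes mh: "\<And>i' i. op_mat Gh i' i = dl i' i + X1 i' i"
    and mv: "\<And>j' j. op_mat Gv j' j = dl j' j + X2 j' j"
    and nh: "\<And>k k'. op_mat (op_inv Gh) k k' = dl k k' + X3 k k'"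
    and nv: "\<And>l l'. op_mat (op_inv Gv) l l' = dl l l' + X4 l l'"
    and z1: "\<And>a b. a > N \<or> b > N \<Longrightarrow> X1 a b = 0"
    and z2: "\<And>a b. a > N \<or> b > N \<Longrightarrow> X2 a b = 0"
    and z3: "\<And>a b. a > N \<or> b > N \<Longrightarrow> X3 a b = 0"
    and z4: "\<And>a b. a > N \<or> b > N \<Longrightarrow> X4 a b = 0"
    and R: "N \<le> R" "i \<le> R" "j \<le> R" "k \<le> R" "l \<le> R"
  shows "gauge Gh Gv A i j k l = GG R X1 X2 X3 X4 A i j k l"
proof -
  have "gauge Gh Gv A i j k l = (\<Sum>i'\<le>R. \<Sum>j'\<le>R. \<Sum>k'\<le>R. \<Sum>l'\<le>R. (dl i' i + X1 i' i) * (dl j' j + X2 j' j) *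
        (dl k k' + X3 k k') * (dl l l' + X4 l l') * A i' j' k' l')"
    unfolding gauge_def mh mv nh nv
  proof (rule nest_trunc)
    fix i' j' k' l' :: nat assume "i' > R \<or> j' > R \<or> k' > R \<or> l' > R"
    thus "(dl i' i + X1 i' i) * (dl j' j + X2 j' j) * (dl k k' + X3 k k') * (dl l l' + X4 l l') * A i' j' k' l' = 0"
      using R z1[of i' i] z2[of j' j] z3[of k k'] z4[of l l'] by (auto simp: dl_def)
  qed
  also have "\<dots> = GG R X1 X2 X3 X4 A i j k l" using GG_expand R by simp
  finally show ?thesis .
qed

definition nsq :: "nat \<Rightarrow> tensor4 \<Rightarrow> real" where
  "nsq R T = (\<Sum>i\<le>R. \<Sum>j\<le>R. \<Sum>k\<le>R. \<Sum>l\<le>R. (T i j k l)\<^sup>2)"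
definition nrm :: "nat \<Rightarrow> tensor4 \<Rightarrow> real" where
  "nrm R T = sqrt (nsq R T)"
definition boxs :: "nat \<Rightarrow> (nat \<times> nat \<times> nat \<times> nat) set" where
  "boxs R = {..R} \<times> {..R} \<times> {..R} \<times> {..R}"
definition fsq :: "nat \<Rightarrow> (nat \<Rightarrow> nat \<Rightarrow> real) \<Rightarrow> real" where
  "fsq R X = (\<Sum>a\<le>R. \<Sum>b\<le>R. (X a b)\<^sup>2)"

lemma cp3: "(\<Sum>j\<le>R. \<Sum>k\<le>R. \<Sum>l\<le>R. f j k l) = (\<Sum>(j,k,l)\<in>{..R}\<times>{..R}\<times>{..R}. f j k l)"
  by (simp add: sum.cartesian_product)
lemma cp2: "(\<Sum>k\<le>R. \<Sum>l\<le>R. f k l) = (\<Sum>(k,l)\<in>{..R}\<times>{..R}. f k l)"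
  by (simp add: sum.cartesian_product)

lemma nsq_box: "nsq R T = (\<Sum>x\<in>boxs R. (tu T x)\<^sup>2)"
  unfolding nsq_def boxs_def tu_def by (simp add: sum.cartesian_product case_prod_beta)

lemma nrm_L2: "nrm R T = L2_set (tu T) (boxs R)"
  unfolding nrm_def L2_set_def nsq_box ..

lemma nsq_nonneg: "0 \<le> nsq R T"
  unfolding nsq_def by (simp add: sum_nonneg)

lemma nrm_nonneg: "0 \<le> nrm R T"
  unfolding nrm_def by (simp add: nsq_nonneg)

lemma nrm_sq: "(nrm R T)\<^sup>2 = nsq R T"
  unfolding nrm_def using nsq_nonneg by simp

lemma nrm_add: "nrm R (\<lambda>i j k l. T i j k l + U i j k l) \<le> nrm R T + nrm R U"
proof -
  have "tu (\<lambda>i j k l. T i j k l + U i j k l) = (\<lambda>x. tu T x + tu U x)"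
    by (auto simp: tu_def fun_eq_iff split: prod.splits)
  thus ?thesis unfolding nrm_L2 by (simp add: L2_set_triangle_ineq)
qed

lemma nrm_tadd: "nrm R (tadd T U) \<le> nrm R T + nrm R U"
  unfolding tadd_def by (rule nrm_add)

lemma nrm_scale: "nrm R (\<lambda>i j k l. c * T i j k l) = \<bar>c\<bar> * nrm R T"
proof -
  have "tu (\<lambda>i j k l. c * T i j k l) = (\<lambda>x. c * tu T x)"
    by (auto simp: tu_def fun_eq_iff split: prod.splits)
  thus ?thesis unfolding nrm_L2 by (simp add: L2_set_scale)
qed

lemma nrm_cong: "(\<And>i j k l. i \<le> R \<Longrightarrow> j \<le> R \<Longrightarrow> k \<le> R \<Longrightarrow> l \<le> R \<Longrightarrow> T i j k l = U i j k l) \<Longrightarrow> nrm R T = nrm R U"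
  unfolding nrm_def nsq_def by (intro arg_cong[where f=sqrt] sum.cong) auto

lemma nrm_mono: "(\<And>i j k l. i \<le> R \<Longrightarrow> j \<le> R \<Longrightarrow> k \<le> R \<Longrightarrow> l \<le> R \<Longrightarrow> \<bar>T i j k l\<bar> \<le> \<bar>U i j k l\<bar>) \<Longrightarrow> nrm R T \<le> nrm R U"
  unfolding nrm_def nsq_def
  by (intro real_sqrt_le_mono sum_mono) (auto simp: abs_le_square_iff)

lemma fsq_nonneg: "0 \<le> fsq R X"
  unfolding fsq_def by (intro sum_nonneg) auto

lemma fsq_T: "fsq R (\<lambda>a b. X b a) = fsq R X"
  unfolding fsq_def by (rule sum.swap)

lemma L0: "(\<Sum>a\<le>R. (\<Sum>a'\<le>R. X a' a * h a')\<^sup>2) \<le> fsq R X * (\<Sum>a'\<le>R. (h a')\<^sup>2)"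
proof -
  have "(\<Sum>a\<le>R. (\<Sum>a'\<le>R. X a' a * h a')\<^sup>2) \<le> (\<Sum>a\<le>R. (\<Sum>a'\<le>R. (X a' a)\<^sup>2) * (\<Sum>a'\<le>R. (h a')\<^sup>2))"
    by (intro sum_mono Cauchy_Schwarz_ineq_sum)
  also have "\<dots> = (\<Sum>a\<le>R. \<Sum>a'\<le>R. (X a' a)\<^sup>2) * (\<Sum>a'\<le>R. (h a')\<^sup>2)"
    by (simp add: sum_distrib_right)
  also have "(\<Sum>a\<le>R. \<Sum>a'\<le>R. (X a' a)\<^sup>2) = fsq R X"
    unfolding fsq_def by (rule sum.swap)
  finally show ?thesis .
qed

lemma L1:
  assumes "finite S"
  shows "(\<Sum>a\<le>R. \<Sum>y\<in>S. (\<Sum>a'\<le>R. X a' a * g a' y)\<^sup>2) \<le> fsq R X * (\<Sum>a'\<le>R. \<Sum>y\<in>S. (g a' y)\<^sup>2)"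
proof -
  have "(\<Sum>a\<le>R. \<Sum>y\<in>S. (\<Sum>a'\<le>R. X a' a * g a' y)\<^sup>2) = (\<Sum>y\<in>S. \<Sum>a\<le>R. (\<Sum>a'\<le>R. X a' a * g a' y)\<^sup>2)"
    by (rule sum.swap)
  also have "\<dots> \<le> (\<Sum>y\<in>S. fsq R X * (\<Sum>a'\<le>R. (g a' y)\<^sup>2))"
    by (intro sum_mono L0)
  also have "\<dots> = fsq R X * (\<Sum>y\<in>S. \<Sum>a'\<le>R. (g a' y)\<^sup>2)"
    by (simp add: sum_distrib_left)
  also have "(\<Sum>y\<in>S. \<Sum>a'\<le>R. (g a' y)\<^sup>2) = (\<Sum>a'\<le>R. \<Sum>y\<in>S. (g a' y)\<^sup>2)"
    by (rule sum.swap)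
  finally show ?thesis .
qed

lemma leg1_bound: "nsq R (leg1 R X T) \<le> fsq R X * nsq R T"
proof -
  let ?S = "{..R}\<times>{..R}\<times>{..R}"
  define g where "g = (\<lambda>i' y. case y of (j,k,l) \<Rightarrow> T i' j k l)"
  have "nsq R (leg1 R X T) = (\<Sum>i\<le>R. \<Sum>y\<in>?S. (\<Sum>i'\<le>R. X i' i * g i' y)\<^sup>2)"
    unfolding nsq_def leg1_def g_def cp3 by (simp add: case_prod_beta)
  also have "\<dots> \<le> fsq R X * (\<Sum>i'\<le>R. \<Sum>y\<in>?S. (g i' y)\<^sup>2)" by (rule L1) auto
  also have "(\<Sum>i'\<le>R. \<Sum>y\<in>?S. (g i' y)\<^sup>2) = nsq R T"
    unfolding nsq_def g_def cp3 by (simp add: case_prod_beta)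
  finally show ?thesis .
qed

lemma leg2_bound: "nsq R (leg2 R X T) \<le> fsq R X * nsq R T"
proof -
  let ?S = "{..R}\<times>{..R}"
  define g where "g = (\<lambda>i j' y. case y of (k,l) \<Rightarrow> T i j' k l)"
  have "nsq R (leg2 R X T) = (\<Sum>i\<le>R. \<Sum>j\<le>R. \<Sum>y\<in>?S. (\<Sum>j'\<le>R. X j' j * g i j' y)\<^sup>2)"
    unfolding nsq_def leg2_def g_def cp2 by (simp add: case_prod_beta)
  also have "\<dots> \<le> (\<Sum>i\<le>R. fsq R X * (\<Sum>j'\<le>R. \<Sum>y\<in>?S. (g i j' y)\<^sup>2))"
    by (intro sum_mono L1) auto
  also have "\<dots> = fsq R X * nsq R T"
  proof -
    have "\<And>i j'. (\<Sum>y\<in>?S. (g i j' y)\<^sup>2) = (\<Sum>k\<le>R. \<Sum>l\<le>R. (T i j' k l)\<^sup>2)"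
      unfolding g_def cp2 by (simp add: case_prod_beta)
    thus ?thesis unfolding nsq_def by (simp add: sum_distrib_left)
  qed
  finally show ?thesis .
qed

lemma leg3_bound: "nsq R (leg3 R X T) \<le> fsq R X * nsq R T"
proof -
  have "nsq R (leg3 R X T) = (\<Sum>i\<le>R. \<Sum>j\<le>R. \<Sum>k\<le>R. \<Sum>l\<in>{..R}. (\<Sum>k'\<le>R. (\<lambda>a b. X b a) k' k * T i j k' l)\<^sup>2)"
    unfolding nsq_def leg3_def by simp
  also have "\<dots> \<le> (\<Sum>i\<le>R. \<Sum>j\<le>R. fsq R (\<lambda>a b. X b a) * (\<Sum>k'\<le>R. \<Sum>l\<in>{..R}. (T i j k' l)\<^sup>2))"
    apply (rule sum_mono)+
    apply (rule L1[where X="\<lambda>a b. X b a" and g="\<lambda>k' l. T _ _ k' l", simplified])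
    by simp
  also have "\<dots> = fsq R X * nsq R T"
    unfolding nsq_def fsq_T[of R X] by (simp add: sum_distrib_left)
  finally show ?thesis .
qed

lemma leg4_bound: "nsq R (leg4 R X T) \<le> fsq R X * nsq R T"
proof -
  have "nsq R (leg4 R X T) = (\<Sum>i\<le>R. \<Sum>j\<le>R. \<Sum>k\<le>R. \<Sum>l\<le>R. (\<Sum>l'\<le>R. (\<lambda>a b. X b a) l' l * T i j k l')\<^sup>2)"
    unfolding nsq_def leg4_def by simp
  also have "\<dots> \<le> (\<Sum>i\<le>R. \<Sum>j\<le>R. \<Sum>k\<le>R. fsq R (\<lambda>a b. X b a) * (\<Sum>l'\<le>R. (T i j k l')\<^sup>2))"
    apply (rule sum_mono)+
    by (rule L0[where X="\<lambda>a b. X b a", simplified])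
  also have "\<dots> = fsq R X * nsq R T"
    unfolding nsq_def fsq_T[of R X] by (simp add: sum_distrib_left)
  finally show ?thesis .
qed

lemma nsq_to_nrm: "nsq R U \<le> fsq R X * nsq R T \<Longrightarrow> nrm R U \<le> sqrt (fsq R X) * nrm R T"
proof -
  assume "nsq R U \<le> fsq R X * nsq R T"
  hence "sqrt (nsq R U) \<le> sqrt (fsq R X * nsq R T)" by (rule real_sqrt_le_mono)
  thus ?thesis unfolding nrm_def real_sqrt_mult .
qed

definition S1 where "S1 R X T = tadd T (leg1 R X T)"
definition S2 where "S2 R X T = tadd T (leg2 R X T)"
definition S3 where "S3 R X T = tadd T (leg3 R X T)"
definition S4 where "S4 R X T = tadd T (leg4 R X T)"

lemma GG_alt: "GG R X1 X2 X3 X4 T = S1 R X1 (S2 R X2 (S3 R X3 (S4 R X4 T)))"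
  unfolding GG_def Let_def S1_def S2_def S3_def S4_def ..

definition r1 :: "(nat \<Rightarrow> real) \<Rightarrow> (nat \<Rightarrow> real) \<Rightarrow> (nat \<Rightarrow> real) \<Rightarrow> (nat \<Rightarrow> real) \<Rightarrow> tensor4" where
  "r1 p q r s = (\<lambda>i j k l. p i * q j * r k * s l)"

lemma S1_r1: "S1 R X (r1 p q r s) = r1 (\<lambda>i. p i + (\<Sum>i'\<le>R. X i' i * p i')) q r s"
  unfolding S1_def tadd_def leg1_def r1_def
  by (simp add: fun_eq_iff ring_distribs sum_distrib_right mult.assoc)
lemma S2_r1: "S2 R X (r1 p q r s) = r1 p (\<lambda>j. q j + (\<Sum>j'\<le>R. X j' j * q j')) r s"
  unfolding S2_def tadd_def leg2_def r1_def
  by (simp add: fun_eq_iff ring_distribs sum_distrib_right sum_distrib_left mult_ac)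
lemma S3_r1: "S3 R X (r1 p q r s) = r1 p q (\<lambda>k. r k + (\<Sum>k'\<le>R. X k k' * r k')) s"
  unfolding S3_def tadd_def leg3_def r1_def
  by (simp add: fun_eq_iff ring_distribs sum_distrib_right sum_distrib_left mult_ac)
lemma S4_r1: "S4 R X (r1 p q r s) = r1 p q r (\<lambda>l. s l + (\<Sum>l'\<le>R. X l l' * s l'))"
  unfolding S4_def tadd_def leg4_def r1_def
  by (simp add: fun_eq_iff ring_distribs sum_distrib_right sum_distrib_left mult_ac)

lemma Astar_r1: "A_star = r1 (dl 0) (dl 0) (dl 0) (dl 0)"
  unfolding A_star_def r1_def dl_def by (simp add: fun_eq_iff)

lemma sum_dl0: "(\<Sum>i'\<le>R. X i' * dl 0 i') = X 0"
proof -
  have "(\<Sum>i'\<le>R. X i' * dl 0 i') = (\<Sum>i'\<le>R. if i' = 0 then X i' else 0)"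
    by (rule sum.cong) (auto simp: dl_def)
  thus ?thesis by simp
qed

lemma GG_Astar: "GG R X1 X2 X3 X4 A_star =
   r1 (\<lambda>i. dl 0 i + X1 0 i) (\<lambda>j. dl 0 j + X2 0 j) (\<lambda>k. dl 0 k + X3 k 0) (\<lambda>l. dl 0 l + X4 l 0)"
  unfolding GG_alt Astar_r1 S4_r1 S3_r1 S2_r1 S1_r1 sum_dl0 ..

lemma S1_add: "S1 R X (tadd T U) = tadd (S1 R X T) (S1 R X U)"
  unfolding S1_def tadd_def leg1_def by (simp add: fun_eq_iff ring_distribs sum.distrib)
lemma S2_add: "S2 R X (tadd T U) = tadd (S2 R X T) (S2 R X U)"
  unfolding S2_def tadd_def leg2_def by (simp add: fun_eq_iff ring_distribs sum.distrib)
lemma S3_add: "S3 R X (tadd T U) = tadd (S3 R X T) (S3 R X U)"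
  unfolding S3_def tadd_def leg3_def by (simp add: fun_eq_iff ring_distribs sum.distrib)
lemma S4_add: "S4 R X (tadd T U) = tadd (S4 R X T) (S4 R X U)"
  unfolding S4_def tadd_def leg4_def by (simp add: fun_eq_iff ring_distribs sum.distrib)

lemma GG_add: "GG R X1 X2 X3 X4 (tadd T U) = tadd (GG R X1 X2 X3 X4 T) (GG R X1 X2 X3 X4 U)"
  unfolding GG_alt S4_add S3_add S2_add S1_add ..

lemma leg1_nrm: "nrm R (leg1 R X T) \<le> sqrt (fsq R X) * nrm R T"
  by (rule nsq_to_nrm[OF leg1_bound])
lemma leg2_nrm: "nrm R (leg2 R X T) \<le> sqrt (fsq R X) * nrm R T"
  by (rule nsq_to_nrm[OF leg2_bound])
lemma leg3_nrm: "nrm R (leg3 R X T) \<le> sqrt (fsq R X) * nrm R T"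
  by (rule nsq_to_nrm[OF leg3_bound])
lemma leg4_nrm: "nrm R (leg4 R X T) \<le> sqrt (fsq R X) * nrm R T"
  by (rule nsq_to_nrm[OF leg4_bound])

lemma step_nrm:
  assumes "nrm R L \<le> y * nrm R T"
  shows "nrm R (tadd T L) \<le> (1 + y) * nrm R T"
  using nrm_tadd[of R T L] assms by (simp add: algebra_simps)

lemma GG_diff:
  assumes y: "sqrt (fsq R X1) \<le> y" "sqrt (fsq R X2) \<le> y" "sqrt (fsq R X3) \<le> y" "sqrt (fsq R X4) \<le> y"
  shows "nrm R (\<lambda>i j k l. GG R X1 X2 X3 X4 T i j k l - T i j k l) \<le> 4 * y * (1 + y) ^ 3 * nrm R T"
proof -
  have y0: "0 \<le> y" using y(1) by (meson order_trans real_sqrt_ge_zero fsq_nonneg)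
  define T4 where "T4 = S4 R X4 T"
  define T3 where "T3 = S3 R X3 T4"
  define T2 where "T2 = S2 R X2 T3"
  have n0: "0 \<le> nrm R T" by (rule nrm_nonneg)
  have l4: "nrm R (leg4 R X4 T) \<le> y * nrm R T"
    using leg4_nrm[of R X4 T] y(4) by (meson mult_right_mono n0 order_trans)
  have n4: "nrm R T4 \<le> (1 + y) * nrm R T" unfolding T4_def S4_def by (rule step_nrm[OF l4])
  have l3: "nrm R (leg3 R X3 T4) \<le> y * ((1 + y) * nrm R T)"
    using leg3_nrm[of R X3 T4] y(3) n4 y0
    by (meson mult_mono nrm_nonneg order_trans)
  have n3: "nrm R T3 \<le> (1 + y) ^ 2 * nrm R T"
  proof -
    have "nrm R T3 \<le> nrm R T4 + nrm R (leg3 R X3 T4)" unfolding T3_def S3_def by (rule nrm_tadd)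
    also have "\<dots> \<le> (1 + y) * nrm R T + y * ((1 + y) * nrm R T)" using n4 l3 by linarith
    also have "\<dots> = (1 + y) ^ 2 * nrm R T" by (simp add: power2_eq_square algebra_simps)
    finally show ?thesis .
  qed
  have l2: "nrm R (leg2 R X2 T3) \<le> y * ((1 + y) ^ 2 * nrm R T)"
    using leg2_nrm[of R X2 T3] y(2) n3 y0
    by (meson mult_mono nrm_nonneg order_trans)
  have n2: "nrm R T2 \<le> (1 + y) ^ 3 * nrm R T"
  proof -
    have "nrm R T2 \<le> nrm R T3 + nrm R (leg2 R X2 T3)" unfolding T2_def S2_def by (rule nrm_tadd)
    also have "\<dots> \<le> (1 + y) ^ 2 * nrm R T + y * ((1 + y) ^ 2 * nrm R T)" using n3 l2 by linarith
    also have "\<dots> = (1 + y) ^ 3 * nrm R T" by (simp add: power2_eq_square power3_eq_cube algebra_simps)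
    finally show ?thesis .
  qed
  have l1: "nrm R (leg1 R X1 T2) \<le> y * ((1 + y) ^ 3 * nrm R T)"
    using leg1_nrm[of R X1 T2] y(1) n2 y0
    by (meson mult_mono nrm_nonneg order_trans)
  have eq: "(\<lambda>i j k l. GG R X1 X2 X3 X4 T i j k l - T i j k l) =
     tadd (tadd (tadd (leg1 R X1 T2) (leg2 R X2 T3)) (leg3 R X3 T4)) (leg4 R X4 T)"
    unfolding GG_alt T2_def T3_def T4_def S1_def S2_def S3_def S4_def
    by (simp add: tadd_def fun_eq_iff)
  have "nrm R (\<lambda>i j k l. GG R X1 X2 X3 X4 T i j k l - T i j k l)
     \<le> nrm R (leg1 R X1 T2) + nrm R (leg2 R X2 T3) + nrm R (leg3 R X3 T4) + nrm R (leg4 R X4 T)"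
    unfolding eq by (meson add_mono nrm_tadd order_trans order_refl)
  also have "\<dots> \<le> y * ((1 + y) ^ 3 * nrm R T) + y * ((1 + y) ^ 2 * nrm R T) + y * ((1 + y) * nrm R T) + y * nrm R T"
    using l1 l2 l3 l4 by linarith
  also have "\<dots> \<le> 4 * y * (1 + y) ^ 3 * nrm R T"
  proof -
    have a: "1 \<le> 1 + y" using y0 by simp
    have c1: "(1 + y) \<le> (1 + y) ^ 3" using power_increasing[of 1 3 "1+y"] a by simp
    have c2: "(1 + y) ^ 2 \<le> (1 + y) ^ 3" using power_increasing[of 2 3 "1+y"] a by simp
    have c3: "1 \<le> (1 + y) ^ 3" using a one_le_power by blast
    have m: "\<And>u. u \<le> (1 + y) ^ 3 \<Longrightarrow> y * (u * nrm R T) \<le> y * ((1 + y) ^ 3 * nrm R T)"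
      using y0 n0 by (intro mult_left_mono mult_right_mono) auto
    have "y * ((1 + y) ^ 3 * nrm R T) + y * ((1 + y) ^ 2 * nrm R T) + y * ((1 + y) * nrm R T) + y * (1 * nrm R T)
        \<le> y * ((1 + y) ^ 3 * nrm R T) + y * ((1 + y) ^ 3 * nrm R T) + y * ((1 + y) ^ 3 * nrm R T) + y * ((1 + y) ^ 3 * nrm R T)"
      using m[OF c1] m[OF c2] m[OF c3] by linarith
    thus ?thesis by (simp add: algebra_simps)
  qed
  finally show ?thesis .
qed

lemma sq3: "(u + v + w)\<^sup>2 \<le> 3 * (u\<^sup>2 + v\<^sup>2 + (w::real)\<^sup>2)"
proof -
  have "0 \<le> (u - v)\<^sup>2 + (v - w)\<^sup>2 + (u - w)\<^sup>2" by simp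
  thus ?thesis by (simp add: power2_eq_square algebra_simps)
qed

lemma if_sq: "(if c then x else 0)\<^sup>2 = (if c then x\<^sup>2 else (0::real))" by simp

lemma fsq_XM:
  fixes a b :: "nat \<Rightarrow> real"
  shows "fsq R (XM a b) \<le> 3 * ((\<Sum>x\<le>R. (a x)\<^sup>2) + (\<Sum>x\<le>R. (b x)\<^sup>2) + (\<Sum>x\<le>R. (b x)\<^sup>2) * (\<Sum>x\<le>R. (a x)\<^sup>2))"
proof -
  let ?u = "\<lambda>i' i. if i' = 0 then a i else 0" and ?v = "\<lambda>i' i. if i = 0 then b i' else 0"
    and ?w = "\<lambda>i' i. b i' * a i"
  have "fsq R (XM a b) \<le> (\<Sum>i'\<le>R. \<Sum>i\<le>R. 3 * ((?u i' i)\<^sup>2 + (?v i' i)\<^sup>2 + (?w i' i)\<^sup>2))"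
    unfolding fsq_def XM_def by (intro sum_mono sq3)
  also have "\<dots> = 3 * ((\<Sum>i'\<le>R. \<Sum>i\<le>R. (?u i' i)\<^sup>2) + (\<Sum>i'\<le>R. \<Sum>i\<le>R. (?v i' i)\<^sup>2) + (\<Sum>i'\<le>R. \<Sum>i\<le>R. (?w i' i)\<^sup>2))"
    by (simp add: sum.distrib sum_distrib_left)
  also have "(\<Sum>i'\<le>R. \<Sum>i\<le>R. (?u i' i)\<^sup>2) = (\<Sum>x\<le>R. (a x)\<^sup>2)"
  proof -
    have h: "\<And>i'. (\<Sum>i\<le>R. (?u i' i)\<^sup>2) = (if i' = 0 then (\<Sum>x\<le>R. (a x)\<^sup>2) else 0)" by simp
    show ?thesis by (simp only: h) simp
  qed
  also have "(\<Sum>i'\<le>R. \<Sum>i\<le>R. (?v i' i)\<^sup>2) = (\<Sum>x\<le>R. (b x)\<^sup>2)"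
    by (simp add: if_sq)
  also have "(\<Sum>i'\<le>R. \<Sum>i\<le>R. (?w i' i)\<^sup>2) = (\<Sum>x\<le>R. (b x)\<^sup>2) * (\<Sum>x\<le>R. (a x)\<^sup>2)"
    by (simp add: power_mult_distrib sum_product)
  finally show ?thesis .
qed

lemma fsq_XN:
  fixes a b :: "nat \<Rightarrow> real"
  shows "fsq R (XN a b d) \<le> 3 * ((\<Sum>x\<le>R. (b x)\<^sup>2) + (\<Sum>x\<le>R. (a x)\<^sup>2) + d\<^sup>2)"
proof -
  let ?u = "\<lambda>k k'. - (if k' = 0 then b k else 0)" and ?v = "\<lambda>k k'. - (if k = 0 then a k' else 0)"
    and ?w = "\<lambda>k k'. if k = 0 \<and> k' = 0 then d else 0"
  have e: "XN a b d k k' = ?u k k' + ?v k k' + ?w k k'" for k k' unfolding XN_def by auto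
  have "fsq R (XN a b d) \<le> (\<Sum>k\<le>R. \<Sum>k'\<le>R. 3 * ((?u k k')\<^sup>2 + (?v k k')\<^sup>2 + (?w k k')\<^sup>2))"
    unfolding fsq_def e by (intro sum_mono sq3)
  also have "\<dots> = 3 * ((\<Sum>k\<le>R. \<Sum>k'\<le>R. (?u k k')\<^sup>2) + (\<Sum>k\<le>R. \<Sum>k'\<le>R. (?v k k')\<^sup>2) + (\<Sum>k\<le>R. \<Sum>k'\<le>R. (?w k k')\<^sup>2))"
    by (simp add: sum.distrib sum_distrib_left)
  also have "(\<Sum>k\<le>R. \<Sum>k'\<le>R. (?u k k')\<^sup>2) = (\<Sum>x\<le>R. (b x)\<^sup>2)"
    by (simp add: if_sq)
  also have "(\<Sum>k\<le>R. \<Sum>k'\<le>R. (?v k k')\<^sup>2) = (\<Sum>x\<le>R. (a x)\<^sup>2)"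
  proof -
    have h: "\<And>k. (\<Sum>k'\<le>R. (?v k k')\<^sup>2) = (if k = 0 then (\<Sum>x\<le>R. (a x)\<^sup>2) else 0)" by simp
    show ?thesis by (simp only: h) simp
  qed
  also have "(\<Sum>k\<le>R. \<Sum>k'\<le>R. (?w k k')\<^sup>2) = d\<^sup>2"
  proof -
    have h: "\<And>k. (\<Sum>k'\<le>R. (?w k k')\<^sup>2) = (if k = 0 then d\<^sup>2 else 0)" by (simp add: if_sq)
    show ?thesis by (simp only: h) simp
  qed
  finally show ?thesis .
qed

lemma ax1: "(\<Sum>x\<le>R. (T x 0 0 0)\<^sup>2) \<le> nsq R T"
  unfolding nsq_def
proof (rule sum_mono)
  fix x assume "x \<in> {..R}"
  have "(T x 0 0 0)\<^sup>2 \<le> (\<Sum>l\<le>R. (T x 0 0 l)\<^sup>2)" by (rule member_le_sum[where f="\<lambda>l. (T x 0 0 l)\<^sup>2"]) auto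
  also have "\<dots> \<le> (\<Sum>k\<le>R. \<Sum>l\<le>R. (T x 0 k l)\<^sup>2)"
    by (rule member_le_sum[where f="\<lambda>k. \<Sum>l\<le>R. (T x 0 k l)\<^sup>2"]) (auto intro!: sum_nonneg)
  also have "\<dots> \<le> (\<Sum>j\<le>R. \<Sum>k\<le>R. \<Sum>l\<le>R. (T x j k l)\<^sup>2)"
    by (rule member_le_sum[where f="\<lambda>j. \<Sum>k\<le>R. \<Sum>l\<le>R. (T x j k l)\<^sup>2"]) (auto intro!: sum_nonneg)
  finally show "(T x 0 0 0)\<^sup>2 \<le> (\<Sum>j\<le>R. \<Sum>k\<le>R. \<Sum>l\<le>R. (T x j k l)\<^sup>2)" .
qed

lemma ax2: "(\<Sum>x\<le>R. (T 0 x 0 0)\<^sup>2) \<le> nsq R T"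
proof -
  have "(\<Sum>x\<le>R. (T 0 x 0 0)\<^sup>2) \<le> (\<Sum>j\<le>R. \<Sum>k\<le>R. \<Sum>l\<le>R. (T 0 j k l)\<^sup>2)"
  proof (rule sum_mono)
    fix x assume "x \<in> {..R}"
    have "(T 0 x 0 0)\<^sup>2 \<le> (\<Sum>l\<le>R. (T 0 x 0 l)\<^sup>2)" by (rule member_le_sum[where f="\<lambda>l. (T 0 x 0 l)\<^sup>2"]) auto
    also have "\<dots> \<le> (\<Sum>k\<le>R. \<Sum>l\<le>R. (T 0 x k l)\<^sup>2)"
      by (rule member_le_sum[where f="\<lambda>k. \<Sum>l\<le>R. (T 0 x k l)\<^sup>2"]) (auto intro!: sum_nonneg)
    finally show "(T 0 x 0 0)\<^sup>2 \<le> (\<Sum>k\<le>R. \<Sum>l\<le>R. (T 0 x k l)\<^sup>2)" .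
  qed
  also have "\<dots> \<le> nsq R T" unfolding nsq_def
    by (rule member_le_sum[where f="\<lambda>i. \<Sum>j\<le>R. \<Sum>k\<le>R. \<Sum>l\<le>R. (T i j k l)\<^sup>2"]) (auto intro!: sum_nonneg)
  finally show ?thesis .
qed

lemma ax3: "(\<Sum>x\<le>R. (T 0 0 x 0)\<^sup>2) \<le> nsq R T"
proof -
  have "(\<Sum>x\<le>R. (T 0 0 x 0)\<^sup>2) \<le> (\<Sum>k\<le>R. \<Sum>l\<le>R. (T 0 0 k l)\<^sup>2)"
    by (rule sum_mono, rule member_le_sum[where f="\<lambda>l. (T 0 0 _ l)\<^sup>2"]) auto
  also have "\<dots> \<le> (\<Sum>j\<le>R. \<Sum>k\<le>R. \<Sum>l\<le>R. (T 0 j k l)\<^sup>2)"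
    by (rule member_le_sum[where f="\<lambda>j. \<Sum>k\<le>R. \<Sum>l\<le>R. (T 0 j k l)\<^sup>2"]) (auto intro!: sum_nonneg)
  also have "\<dots> \<le> nsq R T" unfolding nsq_def
    by (rule member_le_sum[where f="\<lambda>i. \<Sum>j\<le>R. \<Sum>k\<le>R. \<Sum>l\<le>R. (T i j k l)\<^sup>2"]) (auto intro!: sum_nonneg)
  finally show ?thesis .
qed

lemma ax4: "(\<Sum>x\<le>R. (T 0 0 0 x)\<^sup>2) \<le> nsq R T"
proof -
  have "(\<Sum>x\<le>R. (T 0 0 0 x)\<^sup>2) \<le> (\<Sum>k\<le>R. \<Sum>l\<le>R. (T 0 0 k l)\<^sup>2)"
    by (rule member_le_sum[where f="\<lambda>k. \<Sum>l\<le>R. (T 0 0 k l)\<^sup>2"]) (auto intro!: sum_nonneg)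
  also have "\<dots> \<le> (\<Sum>j\<le>R. \<Sum>k\<le>R. \<Sum>l\<le>R. (T 0 j k l)\<^sup>2)"
    by (rule member_le_sum[where f="\<lambda>j. \<Sum>k\<le>R. \<Sum>l\<le>R. (T 0 j k l)\<^sup>2"]) (auto intro!: sum_nonneg)
  also have "\<dots> \<le> nsq R T" unfolding nsq_def
    by (rule member_le_sum[where f="\<lambda>i. \<Sum>j\<le>R. \<Sum>k\<le>R. \<Sum>l\<le>R. (T i j k l)\<^sup>2"]) (auto intro!: sum_nonneg)
  finally show ?thesis .
qed

lemma finite_in_box: "finite F \<Longrightarrow> \<exists>R. F \<subseteq> boxs R \<and> N \<le> R"
proof -
  assume fin: "finite F"
  define R where "R = N + (\<Sum>x\<in>F. case x of (i,j,k,l) \<Rightarrow> i + j + k + l)"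
  have "x \<in> boxs R" if "x \<in> F" for x
  proof -
    obtain i j k l where x: "x = (i,j,k,l)" by (cases x) auto
    have "(case x of (i,j,k,l) \<Rightarrow> i + j + k + l) \<le> (\<Sum>x\<in>F. case x of (i,j,k,l) \<Rightarrow> i + j + k + l)"
      by (rule member_le_sum[OF that]) (use fin in auto)
    thus ?thesis unfolding boxs_def R_def x by auto
  qed
  hence "F \<subseteq> boxs R" by auto
  thus ?thesis by (intro exI[of _ R]) (auto simp: R_def)
qed

lemma box_bound:
  assumes "\<And>R. N \<le> R \<Longrightarrow> nrm R T \<le> C"
  shows "hs_tensor T \<and> hs_norm T \<le> C"
proof -
  have "L2_set (tu T) F \<le> C" if fin: "finite F" for F
  proof -
    obtain R where R: "F \<subseteq> boxs R" "N \<le> R" using finite_in_box[OF fin] by blast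
    have "L2_set (tu T) F \<le> L2_set (tu T) (boxs R)"
      by (rule L2_set_mono_set) (use R in \<open>auto simp: boxs_def\<close>)
    also have "\<dots> = nrm R T" by (simp add: nrm_L2)
    finally show ?thesis using assms[OF R(2)] by linarith
  qed
  from B2[of "tu T" C, OF this] show ?thesis unfolding hs_tensor_tu hs_norm_tu by blast
qed

lemma hs_nrm: "hs_tensor T \<Longrightarrow> nrm R T \<le> hs_norm T"
  unfolding nrm_L2 hs_norm_tu hs_tensor_tu by (rule B1) (auto simp: boxs_def)

lemma tail_exists:
  assumes "hs_tensor T" "0 < \<delta>"
  shows "\<exists>N. \<forall>R. nsq R (\<lambda>i j k l. if N < i \<or> N < j \<or> N < k \<or> N < l then T i j k l else 0) \<le> \<delta>"
proof -
  let ?f = "\<lambda>x. (tu T x)\<^sup>2"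
  have sm: "?f summable_on UNIV" using assms(1) hs_tensor_tu by blast
  obtain F where F: "finite F" "dist (sum ?f F) (infsum ?f UNIV) \<le> \<delta>"
    using infsum_finite_approximation[OF sm assms(2)] by blast
  obtain N where N: "F \<subseteq> boxs N" using finite_in_box[OF F(1)] by blast
  have "nsq R (\<lambda>i j k l. if N < i \<or> N < j \<or> N < k \<or> N < l then T i j k l else 0) \<le> \<delta>" for R
  proof -
    let ?G = "boxs R - boxs N"
    have fG: "finite ?G" unfolding boxs_def by auto
    have "nsq R (\<lambda>i j k l. if N < i \<or> N < j \<or> N < k \<or> N < l then T i j k l else 0)
        = (\<Sum>x\<in>boxs R. if x \<in> boxs N then 0 else ?f x)"
      unfolding nsq_box by (intro sum.cong) (auto simp: tu_def boxs_def not_le split: prod.splits)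
    also have "\<dots> = sum ?f ?G"
      by (rule sum.mono_neutral_cong_right) (auto simp: boxs_def)
    also have "\<dots> = sum ?f (?G \<union> F) - sum ?f F"
      using fG F(1) N by (subst sum.union_disjoint) auto
    also have "sum ?f (?G \<union> F) \<le> infsum ?f UNIV"
      by (rule finite_sum_le_infsum[OF sm]) (use fG F(1) in auto)
    finally show ?thesis using F(2) by (simp add: dist_real_def)
  qed
  thus ?thesis by blast
qed

definition cut :: "nat \<Rightarrow> (nat \<Rightarrow> real) \<Rightarrow> nat \<Rightarrow> real" where
  "cut N f x = (if 1 \<le> x \<and> x \<le> N then f x else 0)"
definition Bt :: "tensor4 \<Rightarrow> tensor4" where "Bt A = (\<lambda>i j k l. A i j k l - A_star i j k l)"
definition va where "va N A = cut N (\<lambda>x. - A x 0 0 0)"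
definition vb where "vb N A = cut N (\<lambda>x. A 0 0 x 0)"
definition va2 where "va2 N A = cut N (\<lambda>x. - A 0 x 0 0)"
definition vb2 where "vb2 N A = cut N (\<lambda>x. A 0 0 0 x)"
definition dd where "dd N A = (\<Sum>m\<le>N. va N A m * vb N A m)"
definition dd2 where "dd2 N A = (\<Sum>m\<le>N. va2 N A m * vb2 N A m)"
definition X1 where "X1 N A = XM (va N A) (vb N A)"
definition X2 where "X2 N A = XM (va2 N A) (vb2 N A)"
definition X3 where "X3 N A = XN (va N A) (vb N A) (dd N A)"
definition X4 where "X4 N A = XN (va2 N A) (vb2 N A) (dd2 N A)"
definition GhA where "GhA N A = GH N (va N A) (vb N A)"
definition GvA where "GvA N A = GH N (va2 N A) (vb2 N A)"
definition Tl :: "nat \<Rightarrow> tensor4 \<Rightarrow> tensor4" where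
  "Tl N T = (\<lambda>i j k l. if N < i \<or> N < j \<or> N < k \<or> N < l then T i j k l else 0)"

lemma nsq_Astar: "nsq R A_star = 1"
proof -
  have "\<And>i j k. (\<Sum>l\<le>R. (A_star i j k l)\<^sup>2) = (if i = 0 \<and> j = 0 \<and> k = 0 then 1 else 0)"
    by (simp add: A_star_def if_sq)
  hence "nsq R A_star = (\<Sum>i\<le>R. \<Sum>j\<le>R. \<Sum>k\<le>R. if i = 0 \<and> j = 0 \<and> k = 0 then 1 else 0)"
    unfolding nsq_def by simp
  also have "\<dots> = 1"
  proof -
    have h: "\<And>i j. (\<Sum>k\<le>R. (if i = 0 \<and> j = 0 \<and> k = 0 then 1 else 0)::real) = (if i = 0 \<and> j = 0 then 1 else 0)"
      subgoal for i j by (cases "i = 0 \<and> j = 0") (auto intro!: sum.neutral)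
      done
    hence "(\<Sum>i\<le>R. \<Sum>j\<le>R. \<Sum>k\<le>R. (if i = 0 \<and> j = 0 \<and> k = 0 then 1 else 0)::real)
       = (\<Sum>i\<le>R. \<Sum>j\<le>R. if i = 0 \<and> j = 0 then 1 else 0)" by (simp only: h)
    also have "\<dots> = 1"
    proof -
      have h2: "\<And>i. (\<Sum>j\<le>R. (if i = 0 \<and> j = 0 then 1 else 0)::real) = (if i = 0 then 1 else 0)"
        subgoal for i by (cases "i = 0") (auto intro!: sum.neutral)
        done
      show ?thesis by (simp only: h2) simp
    qed
    finally show ?thesis .
  qed
  finally show ?thesis .
qed

lemma nrm_Astar: "nrm R A_star = 1"
  unfolding nrm_def nsq_Astar by simp

lemma cut_props:
  "cut N f 0 = 0" "\<And>i. N < i \<Longrightarrow> cut N f i = 0"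
  unfolding cut_def by auto

lemma XM_zero: "a 0 = 0 \<Longrightarrow> b 0 = 0 \<Longrightarrow> (\<And>i. N < i \<Longrightarrow> a i = 0) \<Longrightarrow> (\<And>i. N < i \<Longrightarrow> b i = 0)
   \<Longrightarrow> x > N \<or> y > N \<Longrightarrow> XM a b x y = 0"
  unfolding XM_def by auto

lemma XN_zero: "a 0 = 0 \<Longrightarrow> b 0 = 0 \<Longrightarrow> (\<And>i. N < i \<Longrightarrow> a i = 0) \<Longrightarrow> (\<And>i. N < i \<Longrightarrow> b i = 0)
   \<Longrightarrow> x > N \<or> y > N \<Longrightarrow> XN a b d x y = 0"
  unfolding XN_def by auto

lemma mats:
  fixes a b :: "nat \<Rightarrow> real"
  assumes "a 0 = 0" "b 0 = 0" "\<And>i. N < i \<Longrightarrow> a i = 0" "\<And>i. N < i \<Longrightarrow> b i = 0"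
  shows "op_mat (GH N a b) i' i = dl i' i + XM a b i' i"
    "op_mat (op_inv (GH N a b)) k k' = dl k k' + XN a b (\<Sum>m\<le>N. a m * b m) k k'"
    "invertible_op (GH N a b)"
proof -
  show "op_mat (GH N a b) i' i = dl i' i + XM a b i' i" by (rule GH_mat) (use assms in auto)
  have P: "invertible_op (GH N a b) \<and> (\<forall>y. is_l2 y \<longrightarrow> op_inv (GH N a b) y = HI N a b y)"
    by (rule GH_props) (use assms in auto)
  thus "invertible_op (GH N a b)" by blast
  have "op_mat (op_inv (GH N a b)) k k' = HI N a b (unit_vec k') k"
    unfolding op_mat_def using P l2_uv by simp
  also have "\<dots> = dl k k' + XN a b (\<Sum>m\<le>N. a m * b m) k k'" by (rule HI_mat) (use assms in auto)
  finally show "op_mat (op_inv (GH N a b)) k k' = dl k k' + XN a b (\<Sum>m\<le>N. a m * b m) k k'" .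
qed

lemma gauge_eq:
  assumes "N \<le> R" "i \<le> R" "j \<le> R" "k \<le> R" "l \<le> R"
  shows "gauge (GhA N A) (GvA N A) A i j k l = GG R (X1 N A) (X2 N A) (X3 N A) (X4 N A) A i j k l"
proof (rule gauge_GG[where N=N])
  note cp = cut_props[of N]
  show "op_mat (GhA N A) i' i = dl i' i + X1 N A i' i" for i' i
    unfolding GhA_def X1_def va_def vb_def by (rule mats) (auto simp: cp)
  show "op_mat (GvA N A) i' i = dl i' i + X2 N A i' i" for i' i
    unfolding GvA_def X2_def va2_def vb2_def by (rule mats) (auto simp: cp)
  show "op_mat (op_inv (GhA N A)) i' i = dl i' i + X3 N A i' i" for i' i
    unfolding GhA_def X3_def dd_def by (rule mats) (auto simp: cp va_def vb_def)
  show "op_mat (op_inv (GvA N A)) i' i = dl i' i + X4 N A i' i" for i' i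
    unfolding GvA_def X4_def dd2_def by (rule mats) (auto simp: cp va2_def vb2_def)
  show "x > N \<or> y > N \<Longrightarrow> X1 N A x y = 0" for x y
    unfolding X1_def by (rule XM_zero) (auto simp: cp va_def vb_def)
  show "x > N \<or> y > N \<Longrightarrow> X2 N A x y = 0" for x y
    unfolding X2_def by (rule XM_zero) (auto simp: cp va2_def vb2_def)
  show "x > N \<or> y > N \<Longrightarrow> X3 N A x y = 0" for x y
    unfolding X3_def by (rule XN_zero) (auto simp: cp va_def vb_def)
  show "x > N \<or> y > N \<Longrightarrow> X4 N A x y = 0" for x y
    unfolding X4_def by (rule XN_zero) (auto simp: cp va2_def vb2_def)
qed (use assms in auto)

lemma invs: "invertible_op (GhA N A)" "invertible_op (GvA N A)"
  unfolding GhA_def GvA_def va_def vb_def va2_def vb2_def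
  by (rule mats; auto simp: cut_props)+

lemma arith3: "a \<le> t \<Longrightarrow> b \<le> t \<Longrightarrow> c \<le> t \<Longrightarrow> 3 * (a + b + c) \<le> 9 * (t::real)"
  by simp

lemma abs4: "a' = a + b + c + e \<Longrightarrow> \<bar>a'\<bar> \<le> \<bar>a\<bar> + \<bar>b\<bar> + \<bar>c\<bar> + \<bar>e::real\<bar>"
  by arith

lemma cube_bound: "0 \<le> y \<Longrightarrow> y \<le> 3/100 \<Longrightarrow> (1 + y) ^ 3 \<le> (7/6::real)"
proof -
  assume "0 \<le> y" "y \<le> 3/100"
  hence "(1 + y) ^ 3 \<le> (1 + 3/100) ^ 3" by (intro power_mono) auto
  moreover have "(1 + 3/100::real) ^ 3 \<le> 7/6" by (simp add: power3_eq_cube)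
  ultimately show ?thesis by linarith
qed

context
  fixes A :: tensor4 and \<beta> :: real and N :: nat
  assumes hsA: "hs_tensor A" and A0: "A 0 0 0 0 = 1" and hB: "hs_norm (Bt A) \<le> \<beta>"
    and b0: "0 < \<beta>" and b1: "\<beta> \<le> 1/100"
    and tl: "\<And>R. nsq R (Tl N (one_nonzero_part (Bt A))) \<le> \<beta>^4"
begin

lemma nrm_A: "nrm R A \<le> hs_norm A" by (rule hs_nrm[OF hsA])

lemma A_split: "A = tadd A_star (Bt A)"
  unfolding tadd_def Bt_def by simp

lemma hsB: "hs_tensor (Bt A)"
proof -
  have "nrm R (Bt A) \<le> hs_norm A + 1" for R
  proof -
    have "nrm R (Bt A) \<le> nrm R A + nrm R (\<lambda>i j k l. (-1) * A_star i j k l)"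
      unfolding Bt_def using nrm_add[of R A "\<lambda>i j k l. (-1) * A_star i j k l"] by simp
    also have "\<dots> = nrm R A + 1" using nrm_scale[of R "-1" A_star] nrm_Astar[of R] by simp
    finally show ?thesis using nrm_A[of R] by linarith
  qed
  thus ?thesis using box_bound[of 0 "Bt A"] by blast
qed

lemma nB: "nrm R (Bt A) \<le> \<beta>"
  using hs_nrm[OF hsB, of R] hB by linarith

lemma nsqB: "nsq R (Bt A) \<le> \<beta>\<^sup>2"
proof -
  have "(nrm R (Bt A))\<^sup>2 \<le> \<beta>\<^sup>2" using nB[of R] nrm_nonneg[of R "Bt A"] by (intro power_mono) auto
  thus ?thesis by (simp add: nrm_sq)
qed

lemma vec_bounds:
  "(\<Sum>x\<le>R. (va N A x)\<^sup>2) \<le> \<beta>\<^sup>2" "(\<Sum>x\<le>R. (vb N A x)\<^sup>2) \<le> \<beta>\<^sup>2"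
  "(\<Sum>x\<le>R. (va2 N A x)\<^sup>2) \<le> \<beta>\<^sup>2" "(\<Sum>x\<le>R. (vb2 N A x)\<^sup>2) \<le> \<beta>\<^sup>2"
proof -
  have "(\<Sum>x\<le>R. (va N A x)\<^sup>2) \<le> (\<Sum>x\<le>R. (Bt A x 0 0 0)\<^sup>2)"
    by (intro sum_mono) (auto simp: va_def cut_def Bt_def A_star_def)
  thus "(\<Sum>x\<le>R. (va N A x)\<^sup>2) \<le> \<beta>\<^sup>2" using ax1[where R=R and T="Bt A"] nsqB[of R] by linarith
  have "(\<Sum>x\<le>R. (vb N A x)\<^sup>2) \<le> (\<Sum>x\<le>R. (Bt A 0 0 x 0)\<^sup>2)"
    by (intro sum_mono) (auto simp: vb_def cut_def Bt_def A_star_def)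
  thus "(\<Sum>x\<le>R. (vb N A x)\<^sup>2) \<le> \<beta>\<^sup>2" using ax3[where R=R and T="Bt A"] nsqB[of R] by linarith
  have "(\<Sum>x\<le>R. (va2 N A x)\<^sup>2) \<le> (\<Sum>x\<le>R. (Bt A 0 x 0 0)\<^sup>2)"
    by (intro sum_mono) (auto simp: va2_def cut_def Bt_def A_star_def)
  thus "(\<Sum>x\<le>R. (va2 N A x)\<^sup>2) \<le> \<beta>\<^sup>2" using ax2[where R=R and T="Bt A"] nsqB[of R] by linarith
  have "(\<Sum>x\<le>R. (vb2 N A x)\<^sup>2) \<le> (\<Sum>x\<le>R. (Bt A 0 0 0 x)\<^sup>2)"
    by (intro sum_mono) (auto simp: vb2_def cut_def Bt_def A_star_def)
  thus "(\<Sum>x\<le>R. (vb2 N A x)\<^sup>2) \<le> \<beta>\<^sup>2" using ax4[where R=R and T="Bt A"] nsqB[of R] by linarith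
qed

lemma dot_bound:
  fixes u v :: "nat \<Rightarrow> real"
  assumes "(\<Sum>x\<le>N. (u x)\<^sup>2) \<le> \<beta>\<^sup>2" "(\<Sum>x\<le>N. (v x)\<^sup>2) \<le> \<beta>\<^sup>2"
  shows "(\<Sum>m\<le>N. u m * v m)\<^sup>2 \<le> (\<beta>\<^sup>2)\<^sup>2" "\<bar>\<Sum>m\<le>N. u m * v m\<bar> \<le> \<beta>\<^sup>2"
proof -
  have "(\<Sum>m\<le>N. u m * v m)\<^sup>2 \<le> (\<Sum>x\<le>N. (u x)\<^sup>2) * (\<Sum>x\<le>N. (v x)\<^sup>2)"
    by (rule Cauchy_Schwarz_ineq_sum)
  also have "\<dots> \<le> \<beta>\<^sup>2 * \<beta>\<^sup>2" using assms by (intro mult_mono) (auto intro: sum_nonneg)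
  finally show s: "(\<Sum>m\<le>N. u m * v m)\<^sup>2 \<le> (\<beta>\<^sup>2)\<^sup>2" by (simp add: power2_eq_square)
  thus "\<bar>\<Sum>m\<le>N. u m * v m\<bar> \<le> \<beta>\<^sup>2" using abs_le_square_iff[of "\<Sum>m\<le>N. u m * v m" "\<beta>\<^sup>2"] by simp
qed

lemma dd_bounds: "(dd N A)\<^sup>2 \<le> (\<beta>\<^sup>2)\<^sup>2" "\<bar>dd N A\<bar> \<le> \<beta>\<^sup>2" "(dd2 N A)\<^sup>2 \<le> (\<beta>\<^sup>2)\<^sup>2" "\<bar>dd2 N A\<bar> \<le> \<beta>\<^sup>2"
  unfolding dd_def dd2_def using dot_bound vec_bounds by blast+

lemma beta_facts: "\<beta>\<^sup>2 \<le> 1" "(\<beta>\<^sup>2)\<^sup>2 \<le> \<beta>\<^sup>2" "\<beta>\<^sup>2 * \<beta>\<^sup>2 \<le> \<beta>\<^sup>2"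
proof -
  have "\<beta>\<^sup>2 \<le> 1" using b0 b1 by (simp add: power_le_one)
  thus "\<beta>\<^sup>2 \<le> 1" .
  thus "(\<beta>\<^sup>2)\<^sup>2 \<le> \<beta>\<^sup>2" "\<beta>\<^sup>2 * \<beta>\<^sup>2 \<le> \<beta>\<^sup>2"
    by (simp_all add: power2_eq_square mult_left_le)
qed

lemma sqrt_le_3b: "f \<le> 9 * \<beta>\<^sup>2 \<Longrightarrow> sqrt f \<le> 3 * \<beta>"
proof -
  assume "f \<le> 9 * \<beta>\<^sup>2"
  hence "sqrt f \<le> sqrt ((3 * \<beta>)\<^sup>2)" by (intro real_sqrt_le_mono) (simp add: power_mult_distrib)
  moreover have "sqrt ((3 * \<beta>)\<^sup>2) = 3 * \<beta>" by (subst real_sqrt_abs) (use b0 in simp)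
  ultimately show ?thesis by linarith
qed

lemma fsq_bounds:
  "sqrt (fsq R (X1 N A)) \<le> 3 * \<beta>" "sqrt (fsq R (X2 N A)) \<le> 3 * \<beta>"
  "sqrt (fsq R (X3 N A)) \<le> 3 * \<beta>" "sqrt (fsq R (X4 N A)) \<le> 3 * \<beta>"
proof -
  note vbd = vec_bounds[where R=R] and bf = beta_facts
  have m: "(\<Sum>x\<le>R. (u x)\<^sup>2) * (\<Sum>x\<le>R. (v x)\<^sup>2) \<le> \<beta>\<^sup>2"
    if "(\<Sum>x\<le>R. (u x)\<^sup>2) \<le> \<beta>\<^sup>2" "(\<Sum>x\<le>R. (v x)\<^sup>2) \<le> \<beta>\<^sup>2" for u v :: "nat \<Rightarrow> real"
  proof -
    have "(\<Sum>x\<le>R. (u x)\<^sup>2) * (\<Sum>x\<le>R. (v x)\<^sup>2) \<le> \<beta>\<^sup>2 * \<beta>\<^sup>2"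
      using that by (intro mult_mono) (auto intro: sum_nonneg)
    thus ?thesis using bf by linarith
  qed
  show "sqrt (fsq R (X1 N A)) \<le> 3 * \<beta>" unfolding X1_def
    by (rule sqrt_le_3b, rule order_trans[OF fsq_XM]) (rule arith3[OF vbd(1) vbd(2) m[OF vbd(2) vbd(1)]])
  show "sqrt (fsq R (X2 N A)) \<le> 3 * \<beta>" unfolding X2_def
    by (rule sqrt_le_3b, rule order_trans[OF fsq_XM]) (rule arith3[OF vbd(3) vbd(4) m[OF vbd(4) vbd(3)]])
  show "sqrt (fsq R (X3 N A)) \<le> 3 * \<beta>" unfolding X3_def
    by (rule sqrt_le_3b, rule order_trans[OF fsq_XN]) (rule arith3[OF vbd(2) vbd(1) order_trans[OF dd_bounds(1) bf(2)]])
  show "sqrt (fsq R (X4 N A)) \<le> 3 * \<beta>" unfolding X4_def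
    by (rule sqrt_le_3b, rule order_trans[OF fsq_XN]) (rule arith3[OF vbd(4) vbd(3) order_trans[OF dd_bounds(3) bf(2)]])
qed

abbreviation "GA R \<equiv> GG R (X1 N A) (X2 N A) (X3 N A) (X4 N A)"

lemma GA_diff: "nrm R (\<lambda>i j k l. GA R T i j k l - T i j k l) \<le> 14 * \<beta> * nrm R T"
proof -
  have "nrm R (\<lambda>i j k l. GA R T i j k l - T i j k l) \<le> 4 * (3 * \<beta>) * (1 + 3 * \<beta>) ^ 3 * nrm R T"
    by (rule GG_diff) (rule fsq_bounds)+
  also have "\<dots> \<le> 4 * (3 * \<beta>) * (7/6) * nrm R T"
    using b0 b1 cube_bound[of "3 * \<beta>"] nrm_nonneg[of R T]
    by (intro mult_right_mono mult_left_mono) auto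
  finally show ?thesis by simp
qed


lemma entry_le: "i \<le> R \<Longrightarrow> j \<le> R \<Longrightarrow> k \<le> R \<Longrightarrow> l \<le> R \<Longrightarrow> \<bar>T i j k l\<bar> \<le> nrm R T"
proof -
  assume "i \<le> R" "j \<le> R" "k \<le> R" "l \<le> R"
  hence "(tu T (i,j,k,l))\<^sup>2 \<le> nsq R T" unfolding nsq_box
    by (intro member_le_sum) (auto simp: boxs_def)
  hence "sqrt ((T i j k l)\<^sup>2) \<le> sqrt (nsq R T)" unfolding tu_def by (intro real_sqrt_le_mono) simp
  thus ?thesis unfolding nrm_def by simp
qed

lemma nrm_E: "nrm R (\<lambda>i j k l. GA R (Bt A) i j k l - Bt A i j k l) \<le> 14 * \<beta>\<^sup>2"
proof -
  have "nrm R (\<lambda>i j k l. GA R (Bt A) i j k l - Bt A i j k l) \<le> 14 * \<beta> * nrm R (Bt A)" by (rule GA_diff)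
  also have "\<dots> \<le> 14 * \<beta> * \<beta>" using b0 nB[of R] by (intro mult_left_mono) auto
  finally show ?thesis by (simp add: power2_eq_square)
qed

lemma nrm_A1: "nrm R A \<le> 1 + \<beta>"
proof -
  have "nrm R A \<le> nrm R A_star + nrm R (Bt A)"
    by (subst A_split) (rule nrm_tadd)
  thus ?thesis using nB[of R] nrm_Astar[of R] by linarith
qed

lemma GA_A_split: "GA R A i j k l = GA R A_star i j k l + GA R (Bt A) i j k l"
proof -
  have "GA R A i j k l = GA R (tadd A_star (Bt A)) i j k l" by (simp only: A_split[symmetric])
  also have "\<dots> = tadd (GA R A_star) (GA R (Bt A)) i j k l" by (simp only: GG_add)
  finally show ?thesis by (simp add: tadd_def)
qed

lemma GA_Astar: "GA R A_star i j k l =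
   (dl 0 i + X1 N A 0 i) * (dl 0 j + X2 N A 0 j) * (dl 0 k + X3 N A k 0) * (dl 0 l + X4 N A l 0)"
  by (simp add: GG_Astar r1_def)

lemma v0: "va N A 0 = 0" "vb N A 0 = 0" "va2 N A 0 = 0" "vb2 N A 0 = 0"
  by (simp_all add: va_def vb_def va2_def vb2_def cut_def)

lemma g0_val: "GA R A_star 0 0 0 0 = (1 + dd N A) * (1 + dd2 N A)"
  unfolding GA_Astar by (simp add: X1_def X2_def X3_def X4_def XM_def XN_def dl_def v0)

lemma g0_bound: "\<bar>gauge (GhA N A) (GvA N A) A 0 0 0 0 - 1\<bar> \<le> 17 * \<beta>\<^sup>2"
proof -
  let ?E = "\<lambda>i j k l. GA N (Bt A) i j k l - Bt A i j k l"
  have g: "gauge (GhA N A) (GvA N A) A 0 0 0 0 = (1 + dd N A) * (1 + dd2 N A) + ?E 0 0 0 0"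
    using gauge_eq[of N N 0 0 0 0 A] GA_A_split[of N 0 0 0 0] g0_val[of N]
    by (simp add: Bt_def A_star_def A0)
  have e: "\<bar>?E 0 0 0 0\<bar> \<le> 14 * \<beta>\<^sup>2" using entry_le[of 0 N 0 0 0 ?E] nrm_E[of N] by simp
  have d: "\<bar>dd N A\<bar> \<le> \<beta>\<^sup>2" "\<bar>dd2 N A\<bar> \<le> \<beta>\<^sup>2" using dd_bounds by auto
  have dd: "\<bar>dd N A * dd2 N A\<bar> \<le> \<beta>\<^sup>2"
  proof -
    have "\<bar>dd N A * dd2 N A\<bar> \<le> \<beta>\<^sup>2 * \<beta>\<^sup>2" unfolding abs_mult using d by (intro mult_mono) auto
    thus ?thesis using beta_facts(3) by linarith
  qed
  have "(1 + dd N A) * (1 + dd2 N A) + ?E 0 0 0 0 - 1 = dd N A + dd2 N A + dd N A * dd2 N A + ?E 0 0 0 0"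
    by (simp add: algebra_simps)
  hence "\<bar>gauge (GhA N A) (GvA N A) A 0 0 0 0 - 1\<bar> \<le> \<bar>dd N A\<bar> + \<bar>dd2 N A\<bar> + \<bar>dd N A * dd2 N A\<bar> + \<bar>?E 0 0 0 0\<bar>"
    unfolding g by (rule abs4)
  thus ?thesis using d dd e by linarith
qed


lemma ent_i: "x \<noteq> 0 \<Longrightarrow> GA R A_star x 0 0 0 = va N A x * ((1 + dd N A) * (1 + dd2 N A))"
  unfolding GA_Astar by (simp add: X1_def X2_def X3_def X4_def XM_def XN_def dl_def v0)
lemma ent_j: "x \<noteq> 0 \<Longrightarrow> GA R A_star 0 x 0 0 = va2 N A x * ((1 + dd N A) * (1 + dd2 N A))"
  unfolding GA_Astar by (simp add: X1_def X2_def X3_def X4_def XM_def XN_def dl_def v0)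
lemma ent_k: "x \<noteq> 0 \<Longrightarrow> GA R A_star 0 0 x 0 = - vb N A x * (1 + dd2 N A)"
  unfolding GA_Astar by (simp add: X1_def X2_def X3_def X4_def XM_def XN_def dl_def v0)
lemma ent_l: "x \<noteq> 0 \<Longrightarrow> GA R A_star 0 0 0 x = - vb2 N A x * (1 + dd N A)"
  unfolding GA_Astar by (simp add: X1_def X2_def X3_def X4_def XM_def XN_def dl_def v0)

lemma one_cases: "(of_bool (i \<noteq> 0) + of_bool (j \<noteq> 0) + of_bool (k \<noteq> 0) + of_bool (l \<noteq> 0) = (1::nat)) \<longleftrightarrow>
   (i \<noteq> 0 \<and> j = 0 \<and> k = 0 \<and> l = 0) \<or> (i = 0 \<and> j \<noteq> 0 \<and> k = 0 \<and> l = 0) \<or>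
   (i = 0 \<and> j = 0 \<and> k \<noteq> 0 \<and> l = 0) \<or> (i = 0 \<and> j = 0 \<and> k = 0 \<and> l \<noteq> 0)"
  by (cases "i = 0"; cases "j = 0"; cases "k = 0"; cases "l = 0") auto

lemma coef: "\<bar>1 - (1 + dd N A) * (1 + dd2 N A)\<bar> \<le> 3 * \<beta>\<^sup>2" "\<bar>dd N A\<bar> \<le> 3 * \<beta>\<^sup>2" "\<bar>dd2 N A\<bar> \<le> 3 * \<beta>\<^sup>2"
proof -
  have d: "\<bar>dd N A\<bar> \<le> \<beta>\<^sup>2" "\<bar>dd2 N A\<bar> \<le> \<beta>\<^sup>2" using dd_bounds by auto
  have dd: "\<bar>dd N A * dd2 N A\<bar> \<le> \<beta>\<^sup>2"
  proof -
    have "\<bar>dd N A * dd2 N A\<bar> \<le> \<beta>\<^sup>2 * \<beta>\<^sup>2" unfolding abs_mult using d by (intro mult_mono) auto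
    thus ?thesis using beta_facts(3) by linarith
  qed
  have "1 - (1 + dd N A) * (1 + dd2 N A) = - (dd N A + dd2 N A + dd N A * dd2 N A)" by (simp add: algebra_simps)
  thus "\<bar>1 - (1 + dd N A) * (1 + dd2 N A)\<bar> \<le> 3 * \<beta>\<^sup>2" using d dd by simp
  show "\<bar>dd N A\<bar> \<le> 3 * \<beta>\<^sup>2" "\<bar>dd2 N A\<bar> \<le> 3 * \<beta>\<^sup>2" using d by auto
qed

lemma W_pt: "\<bar>one_nonzero_part (\<lambda>i j k l. GA R A_star i j k l + Bt A i j k l) i j k l\<bar>
   \<le> 3 * \<beta>\<^sup>2 * \<bar>Bt A i j k l\<bar> + \<bar>Tl N (one_nonzero_part (Bt A)) i j k l\<bar>"
proof (cases "of_bool (i \<noteq> 0) + of_bool (j \<noteq> 0) + of_bool (k \<noteq> 0) + of_bool (l \<noteq> 0) = (1::nat)")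
  case False
  thus ?thesis unfolding one_nonzero_part_def by (simp add: b0)
next
  case True
  have on: "one_nonzero_part T i j k l = T i j k l" for T using True unfolding one_nonzero_part_def by simp
  have onW: "one_nonzero_part (\<lambda>i j k l. GA R A_star i j k l + Bt A i j k l) i j k l = GA R A_star i j k l + Bt A i j k l"
    by (rule on)
  have onB: "one_nonzero_part (Bt A) i j k l = Bt A i j k l" by (rule on)
  from True[unfolded one_cases] show ?thesis
  proof (elim disjE conjE)
    assume h: "i \<noteq> 0" "j = 0" "k = 0" "l = 0"
    have B: "Bt A i 0 0 0 = A i 0 0 0" using h by (simp add: Bt_def A_star_def)
    show ?thesis
    proof (cases "i \<le> N")
      case True
      have "va N A i = - A i 0 0 0" using True h by (simp add: va_def cut_def)
      hence "GA R A_star i 0 0 0 + Bt A i 0 0 0 = A i 0 0 0 * (1 - (1 + dd N A) * (1 + dd2 N A))"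
        using ent_i[where R=R, OF h(1)] B by (simp add: algebra_simps)
      hence "\<bar>GA R A_star i 0 0 0 + Bt A i 0 0 0\<bar> \<le> 3 * \<beta>\<^sup>2 * \<bar>Bt A i 0 0 0\<bar>"
        using coef(1) B by (simp add: abs_mult mult.commute mult_left_mono)
      hence "\<bar>one_nonzero_part (\<lambda>i j k l. GA R A_star i j k l + Bt A i j k l) i j k l\<bar> \<le> 3 * \<beta>\<^sup>2 * \<bar>Bt A i j k l\<bar>"
        using h onW by simp
      thus ?thesis by (rule add_increasing2[OF abs_ge_zero])
    next
      case False
      have "va N A i = 0" using False by (simp add: va_def cut_def)
      hence "one_nonzero_part (\<lambda>i j k l. GA R A_star i j k l + Bt A i j k l) i j k l = Tl N (one_nonzero_part (Bt A)) i j k l"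
        using h False ent_i[where R=R, OF h(1)] onW onB by (simp add: Tl_def)
      thus ?thesis by simp
    qed
  next
    assume h: "i = 0" "j \<noteq> 0" "k = 0" "l = 0"
    have B: "Bt A 0 j 0 0 = A 0 j 0 0" using h by (simp add: Bt_def A_star_def)
    show ?thesis
    proof (cases "j \<le> N")
      case True
      have "va2 N A j = - A 0 j 0 0" using True h by (simp add: va2_def cut_def)
      hence "GA R A_star 0 j 0 0 + Bt A 0 j 0 0 = A 0 j 0 0 * (1 - (1 + dd N A) * (1 + dd2 N A))"
        using ent_j[where R=R, OF h(2)] B by (simp add: algebra_simps)
      hence "\<bar>GA R A_star 0 j 0 0 + Bt A 0 j 0 0\<bar> \<le> 3 * \<beta>\<^sup>2 * \<bar>Bt A 0 j 0 0\<bar>"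
        using coef(1) B by (simp add: abs_mult mult.commute mult_left_mono)
      hence "\<bar>one_nonzero_part (\<lambda>i j k l. GA R A_star i j k l + Bt A i j k l) i j k l\<bar> \<le> 3 * \<beta>\<^sup>2 * \<bar>Bt A i j k l\<bar>"
        using h onW by simp
      thus ?thesis by (rule add_increasing2[OF abs_ge_zero])
    next
      case False
      have "va2 N A j = 0" using False by (simp add: va2_def cut_def)
      hence "one_nonzero_part (\<lambda>i j k l. GA R A_star i j k l + Bt A i j k l) i j k l = Tl N (one_nonzero_part (Bt A)) i j k l"
        using h False ent_j[where R=R, OF h(2)] onW onB by (simp add: Tl_def)
      thus ?thesis by simp
    qed
  next
    assume h: "i = 0" "j = 0" "k \<noteq> 0" "l = 0"
    have B: "Bt A 0 0 k 0 = A 0 0 k 0" using h by (simp add: Bt_def A_star_def)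
    show ?thesis
    proof (cases "k \<le> N")
      case True
      have "vb N A k = A 0 0 k 0" using True h by (simp add: vb_def cut_def)
      hence "GA R A_star 0 0 k 0 + Bt A 0 0 k 0 = A 0 0 k 0 * (- dd2 N A)"
        using ent_k[where R=R, OF h(3)] B by (simp add: algebra_simps)
      hence "\<bar>GA R A_star 0 0 k 0 + Bt A 0 0 k 0\<bar> \<le> 3 * \<beta>\<^sup>2 * \<bar>Bt A 0 0 k 0\<bar>"
        using mult_left_mono[OF coef(3) abs_ge_zero[of "A 0 0 k 0"]] B by (simp add: abs_mult mult_ac)
      hence "\<bar>one_nonzero_part (\<lambda>i j k l. GA R A_star i j k l + Bt A i j k l) i j k l\<bar> \<le> 3 * \<beta>\<^sup>2 * \<bar>Bt A i j k l\<bar>"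
        using h onW by simp
      thus ?thesis by (rule add_increasing2[OF abs_ge_zero])
    next
      case False
      have "vb N A k = 0" using False by (simp add: vb_def cut_def)
      hence "one_nonzero_part (\<lambda>i j k l. GA R A_star i j k l + Bt A i j k l) i j k l = Tl N (one_nonzero_part (Bt A)) i j k l"
        using h False ent_k[where R=R, OF h(3)] onW onB by (simp add: Tl_def)
      thus ?thesis by simp
    qed
  next
    assume h: "i = 0" "j = 0" "k = 0" "l \<noteq> 0"
    have B: "Bt A 0 0 0 l = A 0 0 0 l" using h by (simp add: Bt_def A_star_def)
    show ?thesis
    proof (cases "l \<le> N")
      case True
      have "vb2 N A l = A 0 0 0 l" using True h by (simp add: vb2_def cut_def)
      hence "GA R A_star 0 0 0 l + Bt A 0 0 0 l = A 0 0 0 l * (- dd N A)"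
        using ent_l[where R=R, OF h(4)] B by (simp add: algebra_simps)
      hence "\<bar>GA R A_star 0 0 0 l + Bt A 0 0 0 l\<bar> \<le> 3 * \<beta>\<^sup>2 * \<bar>Bt A 0 0 0 l\<bar>"
        using mult_left_mono[OF coef(2) abs_ge_zero[of "A 0 0 0 l"]] B by (simp add: abs_mult mult_ac)
      hence "\<bar>one_nonzero_part (\<lambda>i j k l. GA R A_star i j k l + Bt A i j k l) i j k l\<bar> \<le> 3 * \<beta>\<^sup>2 * \<bar>Bt A i j k l\<bar>"
        using h onW by simp
      thus ?thesis by (rule add_increasing2[OF abs_ge_zero])
    next
      case False
      have "vb2 N A l = 0" using False by (simp add: vb2_def cut_def)
      hence "one_nonzero_part (\<lambda>i j k l. GA R A_star i j k l + Bt A i j k l) i j k l = Tl N (one_nonzero_part (Bt A)) i j k l"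
        using h False ent_l[where R=R, OF h(4)] onW onB by (simp add: Tl_def)
      thus ?thesis by simp
    qed
  qed
qed


lemma if_add: "(if c then x + y else 0) = (if c then x else 0) + (if c then y else (0::real))" by simp
lemma if_abs: "\<bar>if c then x else 0\<bar> \<le> \<bar>x::real\<bar>" by simp
lemma one_add: "one_nonzero_part (\<lambda>i j k l. T i j k l + U i j k l) i j k l = one_nonzero_part T i j k l + one_nonzero_part U i j k l"
  unfolding one_nonzero_part_def by (rule if_add)
lemma one_abs: "\<bar>one_nonzero_part T i j k l\<bar> \<le> \<bar>T i j k l\<bar>"
  unfolding one_nonzero_part_def by (rule if_abs)

lemma nrm_abs: "nrm R (\<lambda>i j k l. \<bar>T i j k l\<bar>) = nrm R T"
  unfolding nrm_def nsq_def by (simp only: power2_abs)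

lemma nrm_Tl: "nrm R (Tl N (one_nonzero_part (Bt A))) \<le> \<beta>\<^sup>2"
proof -
  have "sqrt (nsq R (Tl N (one_nonzero_part (Bt A)))) \<le> sqrt (\<beta>^4)"
    using tl[of R] by (intro real_sqrt_le_mono)
  moreover have "\<beta>^4 = (\<beta>\<^sup>2)\<^sup>2" by (simp flip: power_mult)
  moreover have "sqrt ((\<beta>\<^sup>2)\<^sup>2) = \<beta>\<^sup>2" by (subst real_sqrt_abs) simp
  ultimately have "sqrt (nsq R (Tl N (one_nonzero_part (Bt A)))) \<le> \<beta>\<^sup>2" by metis
  thus ?thesis unfolding nrm_def .
qed

lemma one_bound: "nrm R (one_nonzero_part (GA R A)) \<le> 16 * \<beta>\<^sup>2"
proof -
  let ?W = "\<lambda>i j k l. GA R A_star i j k l + Bt A i j k l"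
  let ?E = "\<lambda>i j k l. GA R (Bt A) i j k l - Bt A i j k l"
  have eq: "one_nonzero_part (GA R A) = (\<lambda>i j k l. one_nonzero_part ?W i j k l + one_nonzero_part ?E i j k l)"
  proof (intro ext)
    fix i j k l
    have "GA R A = (\<lambda>i j k l. ?W i j k l + ?E i j k l)" using GA_A_split by (simp add: fun_eq_iff)
    hence "one_nonzero_part (GA R A) i j k l = one_nonzero_part (\<lambda>i j k l. ?W i j k l + ?E i j k l) i j k l" by simp
    also have "\<dots> = one_nonzero_part ?W i j k l + one_nonzero_part ?E i j k l" by (rule one_add)
    finally show "one_nonzero_part (GA R A) i j k l = one_nonzero_part ?W i j k l + one_nonzero_part ?E i j k l" .
  qed
  have w: "nrm R (one_nonzero_part ?W) \<le> 3 * \<beta>\<^sup>2 * \<beta> + \<beta>\<^sup>2"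
  proof -
    have "nrm R (one_nonzero_part ?W) \<le> nrm R (\<lambda>i j k l. 3 * \<beta>\<^sup>2 * \<bar>Bt A i j k l\<bar> + \<bar>Tl N (one_nonzero_part (Bt A)) i j k l\<bar>)"
      by (rule nrm_mono) (use W_pt in \<open>auto intro: order_trans\<close>)
    also have "\<dots> \<le> nrm R (\<lambda>i j k l. 3 * \<beta>\<^sup>2 * \<bar>Bt A i j k l\<bar>) + nrm R (\<lambda>i j k l. \<bar>Tl N (one_nonzero_part (Bt A)) i j k l\<bar>)"
      by (rule nrm_add)
    also have "\<dots> = 3 * \<beta>\<^sup>2 * nrm R (Bt A) + nrm R (Tl N (one_nonzero_part (Bt A)))"
      using nrm_scale[of R "3 * \<beta>\<^sup>2" "\<lambda>i j k l. \<bar>Bt A i j k l\<bar>"] by (simp add: nrm_abs)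
    also have "\<dots> \<le> 3 * \<beta>\<^sup>2 * \<beta> + \<beta>\<^sup>2"
      using nB[of R] nrm_Tl[of R] by (intro add_mono mult_left_mono) auto
    finally show ?thesis .
  qed
  have e: "nrm R (one_nonzero_part ?E) \<le> 14 * \<beta>\<^sup>2"
  proof -
    have "nrm R (one_nonzero_part ?E) \<le> nrm R ?E" by (rule nrm_mono) (rule one_abs)
    thus ?thesis using nrm_E[of R] by linarith
  qed
  have b3: "3 * \<beta>\<^sup>2 * \<beta> \<le> \<beta>\<^sup>2"
  proof -
    have "3 * \<beta>\<^sup>2 * \<beta> = \<beta>\<^sup>2 * (3 * \<beta>)" by simp
    also have "\<dots> \<le> \<beta>\<^sup>2 * 1" using b1 by (intro mult_left_mono) auto
    finally show ?thesis by simp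
  qed
  have "nrm R (one_nonzero_part (GA R A)) \<le> nrm R (one_nonzero_part ?W) + nrm R (one_nonzero_part ?E)"
    unfolding eq by (rule nrm_add)
  thus ?thesis using w e b3 by linarith
qed

definition g0 where "g0 = gauge (GhA N A) (GvA N A) A 0 0 0 0"
definition Ah where "Ah = (\<lambda>i j k l. gauge (GhA N A) (GvA N A) A i j k l / g0)"

lemma g0_pos: "g0 \<ge> 1/2" "\<bar>1 / g0\<bar> \<le> 2" "\<bar>1 / g0 - 1\<bar> \<le> 34 * \<beta>\<^sup>2"
proof -
  have g: "\<bar>g0 - 1\<bar> \<le> 17 * \<beta>\<^sup>2" unfolding g0_def by (rule g0_bound)
  have "\<beta>\<^sup>2 \<le> (1/100)\<^sup>2" by (rule power_mono) (use b0 b1 in auto)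
  hence "\<beta>\<^sup>2 \<le> 1/10000" by (simp add: power2_eq_square)
  thus g2: "g0 \<ge> 1/2" using g by linarith
  thus "\<bar>1 / g0\<bar> \<le> 2" by (simp add: field_simps)
  have "\<bar>1 / g0 - 1\<bar> = \<bar>g0 - 1\<bar> / g0" using g2 by (simp add: field_simps abs_minus_commute)
  also have "\<dots> = \<bar>g0 - 1\<bar> * (1 / g0)" by simp
  also have "\<dots> \<le> \<bar>g0 - 1\<bar> * 2"
  proof (rule mult_left_mono)
    show "1 / g0 \<le> 2" using g2 by (simp add: field_simps)
  qed simp
  also have "\<dots> \<le> 34 * \<beta>\<^sup>2" using g by simp
  finally show "\<bar>1 / g0 - 1\<bar> \<le> 34 * \<beta>\<^sup>2" .
qed

lemma Ah_box: "N \<le> R \<Longrightarrow> i \<le> R \<Longrightarrow> j \<le> R \<Longrightarrow> k \<le> R \<Longrightarrow> l \<le> R \<Longrightarrow> Ah i j k l = (1 / g0) * GA R A i j k l"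
  unfolding Ah_def using gauge_eq by simp

lemma Ah_dev: "N \<le> R \<Longrightarrow> nrm R (\<lambda>i j k l. Ah i j k l - A_star i j k l) \<le> 32 * \<beta>"
proof -
  assume R: "N \<le> R"
  let ?D = "\<lambda>i j k l. GA R A i j k l - A i j k l"
  have "nrm R (\<lambda>i j k l. Ah i j k l - A_star i j k l)
      = nrm R (\<lambda>i j k l. (1 / g0) * (\<lambda>i j k l. ?D i j k l + Bt A i j k l) i j k l + (1 / g0 - 1) * A_star i j k l)"
    by (rule nrm_cong) (use R in \<open>simp add: Ah_box Bt_def algebra_simps\<close>)
  also have "\<dots> \<le> nrm R (\<lambda>i j k l. (1 / g0) * (\<lambda>i j k l. ?D i j k l + Bt A i j k l) i j k l) + nrm R (\<lambda>i j k l. (1 / g0 - 1) * A_star i j k l)"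
    by (rule nrm_add)
  also have "\<dots> = \<bar>1 / g0\<bar> * nrm R (\<lambda>i j k l. ?D i j k l + Bt A i j k l) + \<bar>1 / g0 - 1\<bar>"
    by (simp only: nrm_scale nrm_Astar) simp
  also have "\<dots> \<le> 2 * (14 * \<beta> * (1 + \<beta>) + \<beta>) + 34 * \<beta>\<^sup>2"
  proof -
    have "nrm R (\<lambda>i j k l. ?D i j k l + Bt A i j k l) \<le> nrm R ?D + nrm R (Bt A)" by (rule nrm_add)
    also have "\<dots> \<le> 14 * \<beta> * nrm R A + \<beta>" using GA_diff[of R A] nB[of R] by linarith
    also have "\<dots> \<le> 14 * \<beta> * (1 + \<beta>) + \<beta>" using nrm_A1[of R] b0 by (intro add_mono mult_left_mono) auto
    finally have n: "nrm R (\<lambda>i j k l. ?D i j k l + Bt A i j k l) \<le> 14 * \<beta> * (1 + \<beta>) + \<beta>" .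
    have "\<bar>1 / g0\<bar> * nrm R (\<lambda>i j k l. ?D i j k l + Bt A i j k l) \<le> 2 * (14 * \<beta> * (1 + \<beta>) + \<beta>)"
      using g0_pos(2) n by (intro mult_mono) (auto simp: nrm_nonneg)
    thus ?thesis using g0_pos(3) by linarith
  qed
  also have "\<dots> \<le> 32 * \<beta>"
  proof -
    have "2 * (14 * \<beta> * (1 + \<beta>) + \<beta>) + 34 * \<beta>\<^sup>2 = 30 * \<beta> + 62 * (\<beta> * \<beta>)"
      by (simp add: power2_eq_square algebra_simps)
    also have "\<dots> \<le> 30 * \<beta> + 62 * (\<beta> * (1/100))" using b0 b1 by (intro add_mono mult_left_mono) auto
    also have "\<dots> \<le> 32 * \<beta>" using b0 by simp
    finally show ?thesis .
  qed
  finally show ?thesis .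
qed

lemma Ah_one: "N \<le> R \<Longrightarrow> nrm R (one_nonzero_part Ah) \<le> 32 * \<beta>\<^sup>2"
proof -
  assume R: "N \<le> R"
  have "nrm R (one_nonzero_part Ah) = nrm R (\<lambda>i j k l. (1 / g0) * one_nonzero_part (GA R A) i j k l)"
  proof (rule nrm_cong)
    fix i j k l assume "i \<le> R" "j \<le> R" "k \<le> R" "l \<le> R"
    thus "one_nonzero_part Ah i j k l = (1 / g0) * one_nonzero_part (GA R A) i j k l"
      using R by (simp add: one_nonzero_part_def Ah_box)
  qed
  also have "\<dots> = \<bar>1 / g0\<bar> * nrm R (one_nonzero_part (GA R A))" by (rule nrm_scale)
  also have "\<dots> \<le> 2 * (16 * \<beta>\<^sup>2)"
    using g0_pos(2) one_bound[of R] by (intro mult_mono) (auto simp: nrm_nonneg)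
  finally show ?thesis by simp
qed

lemma ctx_main:
  "invertible_op (GhA N A) \<and> invertible_op (GvA N A) \<and>
   \<bar>gauge (GhA N A) (GvA N A) A 0 0 0 0 - 1\<bar> \<le> 17 * \<beta>\<^sup>2 \<and>
   hs_tensor (\<lambda>i j k l. gauge (GhA N A) (GvA N A) A i j k l / gauge (GhA N A) (GvA N A) A 0 0 0 0) \<and>
   (\<lambda>i j k l. gauge (GhA N A) (GvA N A) A i j k l / gauge (GhA N A) (GvA N A) A 0 0 0 0) 0 0 0 0 = 1 \<and>
   hs_norm (\<lambda>i j k l. (\<lambda>i j k l. gauge (GhA N A) (GvA N A) A i j k l / gauge (GhA N A) (GvA N A) A 0 0 0 0) i j k l - A_star i j k l) \<le> 32 * \<beta> \<and>
   hs_norm (one_nonzero_part (\<lambda>i j k l. gauge (GhA N A) (GvA N A) A i j k l / gauge (GhA N A) (GvA N A) A 0 0 0 0)) \<le> 32 * \<beta>\<^sup>2"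
proof -
  have A: "(\<lambda>i j k l. gauge (GhA N A) (GvA N A) A i j k l / gauge (GhA N A) (GvA N A) A 0 0 0 0) = Ah"
    unfolding Ah_def g0_def ..
  have hs: "hs_tensor Ah"
  proof -
    have "nrm R Ah \<le> 32 * \<beta> + 1" if "N \<le> R" for R
    proof -
      have "nrm R Ah \<le> nrm R (\<lambda>i j k l. Ah i j k l - A_star i j k l) + nrm R A_star"
        using nrm_add[of R "\<lambda>i j k l. Ah i j k l - A_star i j k l" A_star] by simp
      thus ?thesis using Ah_dev[OF that] nrm_Astar[of R] by linarith
    qed
    thus ?thesis using box_bound[of N Ah] by blast
  qed
  have one: "Ah 0 0 0 0 = 1" using g0_pos(1) unfolding Ah_def g0_def[symmetric] by simp
  have d: "hs_norm (\<lambda>i j k l. Ah i j k l - A_star i j k l) \<le> 32 * \<beta>"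
    using box_bound[of N "\<lambda>i j k l. Ah i j k l - A_star i j k l" "32 * \<beta>"] Ah_dev by blast
  have o: "hs_norm (one_nonzero_part Ah) \<le> 32 * \<beta>\<^sup>2"
    using box_bound[of N "one_nonzero_part Ah" "32 * \<beta>\<^sup>2"] Ah_one by blast
  have hs': "hs_tensor (\<lambda>i j k l. gauge (GhA N A) (GvA N A) A i j k l / gauge (GhA N A) (GvA N A) A 0 0 0 0)"
    using hs unfolding Ah_def g0_def .
  have d': "hs_norm (\<lambda>i j k l. gauge (GhA N A) (GvA N A) A i j k l / gauge (GhA N A) (GvA N A) A 0 0 0 0 - A_star i j k l) \<le> 32 * \<beta>"
    using d unfolding Ah_def g0_def .
  have o': "hs_norm (one_nonzero_part (\<lambda>i j k l. gauge (GhA N A) (GvA N A) A i j k l / gauge (GhA N A) (GvA N A) A 0 0 0 0)) \<le> 32 * \<beta>\<^sup>2"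
    using o unfolding Ah_def g0_def .
  have one': "gauge (GhA N A) (GvA N A) A 0 0 0 0 / gauge (GhA N A) (GvA N A) A 0 0 0 0 = 1"
    using g0_pos(1) unfolding g0_def by simp
  show ?thesis using invs g0_bound hs' one' d' o' by (intro conjI) assumption+
qed

end

lemma if_abs': "\<bar>if c then x else 0\<bar> \<le> \<bar>x::real\<bar>" by simp

lemma hs_one_B:
  assumes hsA: "hs_tensor A"
  shows "hs_tensor (one_nonzero_part (Bt A))"
proof -
  have "nrm R (one_nonzero_part (Bt A)) \<le> hs_norm A + 1" for R
  proof -
    have "nrm R (one_nonzero_part (Bt A)) \<le> nrm R (Bt A)"
    proof (rule nrm_mono)
      fix i j k l
      show "\<bar>one_nonzero_part (Bt A) i j k l\<bar> \<le> \<bar>Bt A i j k l\<bar>"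
        unfolding one_nonzero_part_def by (rule if_abs')
    qed
    also have "nrm R (Bt A) \<le> nrm R A + nrm R (\<lambda>i j k l. (-1) * A_star i j k l)"
      unfolding Bt_def using nrm_add[of R A "\<lambda>i j k l. (-1) * A_star i j k l"] by simp
    also have "\<dots> = nrm R A + 1" using nrm_scale[of R "-1" A_star] nrm_Astar[of R] by simp
    finally show ?thesis using hs_nrm[OF hsA, of R] by linarith
  qed
  thus ?thesis using box_bound[of 0 "one_nonzero_part (Bt A)"] by blast
qed

theorem proposition1:
  fixes K :: real
  assumes "K > 0"
  shows "\<exists>K'>0. \<exists>\<epsilon>0>0. \<forall>\<epsilon> (A :: tensor4).
           0 < \<epsilon> \<and> \<epsilon> \<le> \<epsilon>0 \<and> cond_A1 \<epsilon> K A \<longrightarrow>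
           (\<exists>Gh Gv. invertible_op Gh \<and> invertible_op Gv \<and>
              \<bar>gauge Gh Gv A 0 0 0 0 - 1\<bar> \<le> K' * \<epsilon>\<^sup>2 \<and>
              cond_A2 \<epsilon> K' (\<lambda>i j k l. gauge Gh Gv A i j k l / gauge Gh Gv A 0 0 0 0))"
proof -
  have pos1: "0 < 40 * K * (1 + K)" using assms by simp
  have pos2: "0 < 1 / (100 * K)" using assms by simp
  have main: "\<forall>\<epsilon> (A :: tensor4).
           0 < \<epsilon> \<and> \<epsilon> \<le> 1 / (100 * K) \<and> cond_A1 \<epsilon> K A \<longrightarrow>
           (\<exists>Gh Gv. invertible_op Gh \<and> invertible_op Gv \<and>
              \<bar>gauge Gh Gv A 0 0 0 0 - 1\<bar> \<le> (40 * K * (1 + K)) * \<epsilon>\<^sup>2 \<and>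
              cond_A2 \<epsilon> (40 * K * (1 + K)) (\<lambda>i j k l. gauge Gh Gv A i j k l / gauge Gh Gv A 0 0 0 0))"
  proof (intro allI impI)
  fix \<epsilon> :: real and A :: tensor4
  assume h: "0 < \<epsilon> \<and> \<epsilon> \<le> 1 / (100 * K) \<and> cond_A1 \<epsilon> K A"
  define \<beta> where "\<beta> = K * \<epsilon>"
  have hsA: "hs_tensor A" and A0: "A 0 0 0 0 = 1" and hB: "hs_norm (Bt A) \<le> \<beta>"
    using h unfolding cond_A1_def Bt_def \<beta>_def by auto
  have b0: "0 < \<beta>" unfolding \<beta>_def using h assms by simp
  have b1: "\<beta> \<le> 1/100"
  proof -
    have "K * \<epsilon> \<le> K * (1 / (100 * K))" using h assms by (intro mult_left_mono) auto
    thus ?thesis unfolding \<beta>_def using assms by simp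
  qed
  have d4: "0 < \<beta>^4" using b0 by simp
  obtain N where tl: "\<And>R. nsq R (Tl N (one_nonzero_part (Bt A))) \<le> \<beta>^4"
    using tail_exists[OF hs_one_B[OF hsA] d4] unfolding Tl_def by blast
  note M = ctx_main[OF hsA A0 hB b0 b1 tl]
  let ?K' = "40 * K * (1 + K)"
  have k1: "32 * \<beta> \<le> ?K' * \<epsilon>" unfolding \<beta>_def using assms h
    by (simp add: algebra_simps mult_nonneg_nonneg)
  have k2: "32 * \<beta>\<^sup>2 \<le> ?K' * \<epsilon>\<^sup>2" and k3: "17 * \<beta>\<^sup>2 \<le> ?K' * \<epsilon>\<^sup>2"
  proof -
    have "32 * \<beta>\<^sup>2 = 32 * K * K * \<epsilon>\<^sup>2" unfolding \<beta>_def by (simp add: power2_eq_square)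
    also have "\<dots> \<le> ?K' * \<epsilon>\<^sup>2" using assms by (intro mult_right_mono) (auto simp: algebra_simps)
    finally show c: "32 * \<beta>\<^sup>2 \<le> ?K' * \<epsilon>\<^sup>2" .
    show "17 * \<beta>\<^sup>2 \<le> ?K' * \<epsilon>\<^sup>2" by (rule order_trans[OF _ c]) simp
  qed
  show "\<exists>Gh Gv. invertible_op Gh \<and> invertible_op Gv \<and>
              \<bar>gauge Gh Gv A 0 0 0 0 - 1\<bar> \<le> ?K' * \<epsilon>\<^sup>2 \<and>
              cond_A2 \<epsilon> ?K' (\<lambda>i j k l. gauge Gh Gv A i j k l / gauge Gh Gv A 0 0 0 0)"
  proof (rule exI[of _ "GhA N A"], rule exI[of _ "GvA N A"], intro conjI)
    show "invertible_op (GhA N A)" "invertible_op (GvA N A)" using M by blast+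
    show "\<bar>gauge (GhA N A) (GvA N A) A 0 0 0 0 - 1\<bar> \<le> ?K' * \<epsilon>\<^sup>2" using M k3 by linarith
    show "cond_A2 \<epsilon> ?K' (\<lambda>i j k l. gauge (GhA N A) (GvA N A) A i j k l / gauge (GhA N A) (GvA N A) A 0 0 0 0)"
      unfolding cond_A2_def cond_A1_def using M k1 k2 by (meson order_trans)
  qed
  qed
  show ?thesis
    apply (rule exI[where x="40 * K * (1 + K)"], rule conjI, fact pos1)
    apply (rule exI[where x="1 / (100 * K)"], rule conjI, fact pos2)
    by (rule main)
qed

end
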